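(* Let $N\ge 1$, $p,q\ge 1$, $d=p+q$, and let $\mathcal{X}\subset\mathbb{R}^p$, $\mathcal{Y}\subset\mathbb{R}^q$ be nonempty, convex, closed and bounded; set $\mathcal{Z}=\mathcal{X}\times\mathcal{Y}$ and $\mathcal{Z}^N=\{[\mathbf z_1;\dots;\mathbf z_N]:\mathbf z_n\in\mathcal Z\}$. For $n=1,\dots,N$ let $f_n:\mathbb{R}^p\times\mathbb{R}^q\to\mathbb{R}$ be differentiable, $\rho$-weakly convex in $\mathbf x$ and $\rho$-weakly concave in $\mathbf y$ on $\mathcal X\times\mathcal Y$, with $\rho>0$. Define for $\mathbf z=[\mathbf x;\mathbf y]$: $\mathcal B_n(\mathbf z)=[\nabla_{\mathbf x}f_n(\mathbf x,\mathbf y);-\nabla_{\mathbf y}f_n(\mathbf x,\mathbf y)]$ and $\mathcal R_n(\mathbf z)=N_{\mathcal X}(\mathbf x)\times N_{\mathcal Y}(\mathbf y)$ (product of normal cones, i.e. the subdifferential of the indicator function of $\mathcal Z$). For $\mathbf z=[\mathbf z_1;\dots;\mathbf z_N]\in\mathbb{R}^{Nd}$ let $\mathcal B(\mathbf z)=[\mathcal B_1(\mathbf z_1);\dots;\mathcal B_N(\mathbf z_N)]$ and $\mathcal R(\mathbf z)=\mathcal R_1(\mathbf z_1)\times\dots\times\mathcal R_N(\mathbf z_N)$. Let $\mathbf W\in\mathbb{R}^{N\times N}$ satisfy $\mathbf W=\mathbf W^\top$, $\mathbf W\mathbf 1_N=\mathbf 1_N$, $\mathrm{null}(\mathbf I-\mathbf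 W)=\mathrm{span}\{\mathbf 1_N\}$, and $\mathbf 0\prec\mathbf W\preceq\mathbf I_N$; let $\hat{\mathbf W}=\mathbf W\otimes\mathbf I_d$ and $\mathbf U=(\mathbf I_{Nd}-\hat{\mathbf W})^{1/2}$. For $\alpha>0$ and $\mathbf v=[\mathbf z;\mathbf q]\in\mathbb{R}^{2Nd}$ define the (set-valued) operator $\mathcal T(\mathbf v)=\{[\alpha\mathbf g+\mathbf U\mathbf q;\,-\mathbf U\mathbf z]:\mathbf g\in\mathcal B(\mathbf z)+\mathcal R(\mathbf z)\}$ and the matrix $\mathbf D=\begin{bmatrix}\mathbf I&\mathbf U\\ \mathbf U&\mathbf I\end{bmatrix}$. Then: (i) the operator $\mathcal B+\mathcal R$ is $\rho$-weakly monotone; (ii) if $\alpha<\rho^{-1}$, then the operator $(\mathbf I+\alpha(\mathcal B+\mathcal R))^{-1}$ is well-defined; (iii) if $\alpha\le \bigl(1-(1-\lambda_{\min}(\mathbf W))^{1/2}\bigr)/(2\rho)$, then the operator $\mathbf D+\mathcal T$ is $(\lambda_{\min}(\mathbf W)/4)$-strongly monotone.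
   Context: A function $\phi$ is $\rho$-weakly convex on a set $S$ if $\phi(\hat{\mathbf x})\ge\phi(\mathbf x)+\langle\nabla\phi(\mathbf x),\hat{\mathbf x}-\mathbf x\rangle-\frac{\rho}{2}\|\hat{\mathbf x}-\mathbf x\|^2$ for all $\mathbf x,\hat{\mathbf x}\in S$; $\phi$ is $\rho$-weakly concave if $-\phi$ is $\rho$-weakly convex. A (possibly set-valued) operator $F$ is $\rho$-weakly monotone if $\langle \mathbf g-\hat{\mathbf g},\mathbf z-\hat{\mathbf z}\rangle\ge-\rho\|\mathbf z-\hat{\mathbf z}\|^2$ for all $\mathbf z,\hat{\mathbf z}$ and all $\mathbf g\in F(\mathbf z)$, $\hat{\mathbf g}\in F(\hat{\mathbf z})$; it is $\mu$-strongly monotone if instead $\langle \mathbf g-\hat{\mathbf g},\mathbf z-\hat{\mathbf z}\rangle\ge\mu\|\mathbf z-\hat{\mathbf z}\|^2$. An inverse operator $\mathcal G^{-1}$ is called well-defined if for every $\mathbf z$ the problem of finding $\mathbf u$ with $\mathbf z\in\mathcal G(\mathbf u)$ has a unique solution. $\lambda_{\min}$ denotes the smallest eigenvalue; $\otimes$ the Kronecker product. *)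

theory Defs
  imports "HOL-Analysis.Analysis"
begin

text \<open>Stacked vectors in R^{Nd} are modelled as ((real^'p) \<times> (real^'q))^'n:
  node index 'n (N = CARD('n)), local variable z_n = (x_n, y_n).\<close>

type_synonym ('p,'q,'n) stack = "((real^'p::finite) \<times> (real^'q::finite))^'n::finite"

definition normal_cone :: "'a::real_inner set \<Rightarrow> 'a \<Rightarrow> 'a set" where
  "normal_cone S x = (if x \<in> S then {g. \<forall>x'\<in>S. g \<bullet> (x' - x) \<le> 0} else {})"

definition grad_x :: "((real^'p) \<times> (real^'q) \<Rightarrow> real) \<Rightarrow> real^'p \<Rightarrow> real^'q \<Rightarrow> real^'p" where
  "grad_x f x y = (\<Sum>i\<in>Basis. frechet_derivative f (at (x,y)) (i, 0) *\<^sub>R i)"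

definition grad_y :: "((real^'p) \<times> (real^'q) \<Rightarrow> real) \<Rightarrow> real^'p \<Rightarrow> real^'q \<Rightarrow> real^'q" where
  "grad_y f x y = (\<Sum>i\<in>Basis. frechet_derivative f (at (x,y)) (0, i) *\<^sub>R i)"

definition weakly_convex_on :: "real \<Rightarrow> 'a::euclidean_space set \<Rightarrow> ('a \<Rightarrow> real) \<Rightarrow> ('a \<Rightarrow> 'a) \<Rightarrow> bool" where
  "weakly_convex_on \<rho> S \<phi> g \<longleftrightarrow>
     (\<forall>x\<in>S. \<forall>x'\<in>S. \<phi> x' \<ge> \<phi> x + g x \<bullet> (x' - x) - \<rho> / 2 * (norm (x' - x))\<^sup>2)"

definition Bn :: "((real^'p) \<times> (real^'q) \<Rightarrow> real) \<Rightarrow> (real^'p) \<times> (real^'q) \<Rightarrow> (real^'p) \<times> (real^'q)" where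
  "Bn f z = (grad_x f (fst z) (snd z), - grad_y f (fst z) (snd z))"

definition Rn :: "(real^'p) set \<Rightarrow> (real^'q) set \<Rightarrow> (real^'p) \<times> (real^'q) \<Rightarrow> ((real^'p) \<times> (real^'q)) set" where
  "Rn X Y z = normal_cone X (fst z) \<times> normal_cone Y (snd z)"

definition BR :: "('n \<Rightarrow> (real^'p) \<times> (real^'q) \<Rightarrow> real) \<Rightarrow> (real^'p) set \<Rightarrow> (real^'q) set
    \<Rightarrow> ('p::finite,'q::finite,'n::finite) stack \<Rightarrow> ('p,'q,'n) stack set" where
  "BR f X Y z = {g. \<forall>n. g $ n - Bn (f n) (z $ n) \<in> Rn X Y (z $ n)}"

definition weakly_monotone :: "real \<Rightarrow> ('a::real_inner \<Rightarrow> 'a set) \<Rightarrow> bool" where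
  "weakly_monotone \<rho> F \<longleftrightarrow>
     (\<forall>z z' g g'. g \<in> F z \<longrightarrow> g' \<in> F z' \<longrightarrow> (g - g') \<bullet> (z - z') \<ge> - \<rho> * (norm (z - z'))\<^sup>2)"

definition strongly_monotone :: "real \<Rightarrow> ('a::real_inner \<Rightarrow> 'a set) \<Rightarrow> bool" where
  "strongly_monotone \<mu> F \<longleftrightarrow>
     (\<forall>z z' g g'. g \<in> F z \<longrightarrow> g' \<in> F z' \<longrightarrow> (g - g') \<bullet> (z - z') \<ge> \<mu> * (norm (z - z'))\<^sup>2)"

definition inverse_well_defined :: "('a \<Rightarrow> 'b set) \<Rightarrow> bool" where
  "inverse_well_defined G \<longleftrightarrow> (\<forall>z. \<exists>!u. z \<in> G u)"

definition lambda_min :: "real^'n^'n \<Rightarrow> real" where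
  "lambda_min W = Min {l. \<exists>v. v \<noteq> 0 \<and> W *v v = l *\<^sub>R v}"

text \<open>Kronecker product W \<otimes> I_d acting on stacked vectors.\<close>
definition kron_I :: "real^'n^'n \<Rightarrow> ('p::finite,'q::finite,'n::finite) stack \<Rightarrow> ('p,'q,'n) stack" where
  "kron_I W z = (\<chi> n. \<Sum>m\<in>UNIV. W $ n $ m *\<^sub>R z $ m)"

definition psd_sqrt :: "('a::real_inner \<Rightarrow> 'a) \<Rightarrow> ('a \<Rightarrow> 'a)" where
  "psd_sqrt L = (THE S. linear S \<and> (\<forall>x y. S x \<bullet> y = x \<bullet> S y) \<and> (\<forall>x. 0 \<le> S x \<bullet> x)
                    \<and> (\<forall>x. S (S x) = L x))"

definition Uop :: "real^'n^'n \<Rightarrow> ('p::finite,'q::finite,'n::finite) stack \<Rightarrow> ('p,'q,'n) stack" where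
  "Uop W = psd_sqrt (\<lambda>z. z - kron_I W z)"

definition DT :: "('n \<Rightarrow> (real^'p) \<times> (real^'q) \<Rightarrow> real) \<Rightarrow> (real^'p) set \<Rightarrow> (real^'q) set
    \<Rightarrow> real^'n^'n \<Rightarrow> real \<Rightarrow> ('p::finite,'q::finite,'n::finite) stack \<times> ('p,'q,'n) stack
    \<Rightarrow> (('p,'q,'n) stack \<times> ('p,'q,'n) stack) set" where
  "DT f X Y W \<alpha> v =
     (let z = fst v; q = snd v; U = Uop W in
       {(z + U q, U z + q) + (\<alpha> *\<^sub>R g + U q, - U z) | g. g \<in> BR f X Y z})"

end

theory Submission
  imports Defs
begin
lemma quad_nonneg_lin:
  fixes c d :: real
  assumes "\<And>t. 0 \<le> 2 * t * c + t^2 * d"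
  shows "c = 0"
proof (rule ccontr)
  assume "c \<noteq> 0"
  define t where "t = - c / (\<bar>d\<bar> + 2)"
  have pos: "\<bar>d\<bar> + 2 > 0" by simp
  have "0 \<le> 2 * t * c + t^2 * d" by (rule assms)
  hence "0 \<le> (2 * t * c + t^2 * d) * (\<bar>d\<bar> + 2)^2" by simp
  also have "\<dots> = 2 * (t * (\<bar>d\<bar> + 2)) * c * (\<bar>d\<bar> + 2) + (t * (\<bar>d\<bar> + 2))^2 * d"
    by (simp add: algebra_simps power2_eq_square)
  also have "t * (\<bar>d\<bar> + 2) = - c" unfolding t_def using pos by simp
  also have "2 * (- c) * c * (\<bar>d\<bar> + 2) + (- c)^2 * d = c^2 * (d - 2 * (\<bar>d\<bar> + 2))"
    by (simp add: algebra_simps power2_eq_square)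
  finally have "0 \<le> c^2 * (d - 2 * (\<bar>d\<bar> + 2))" .
  moreover have "c^2 > 0" using \<open>c \<noteq> 0\<close> by simp
  moreover have "d - 2 * (\<bar>d\<bar> + 2) < 0" by (cases "0 \<le> d") (simp_all add: algebra_simps)
  ultimately show False by (simp add: mult_pos_neg zero_le_mult_iff)
qed

lemma spectral_subspace:
  fixes A :: "'a::euclidean_space \<Rightarrow> 'a"
  assumes lin: "linear A" and sym: "\<And>x y. A x \<bullet> y = x \<bullet> A y"
  shows "subspace V \<Longrightarrow> A ` V \<subseteq> V \<Longrightarrow> \<exists>B. finite B \<and> B \<subseteq> V \<and> (\<forall>b\<in>B. norm b = 1)
     \<and> pairwise orthogonal B \<and> span B = V \<and> (\<forall>b\<in>B. A b = (b \<bullet> A b) *\<^sub>R b)"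
proof (induction "dim V" arbitrary: V rule: less_induct)
  case less
  show ?case
  proof (cases "V = {0}")
    case True then show ?thesis by (intro exI[of _ "{}"]) auto
  next
    case False
    then obtain v where v: "v \<in> V" "v \<noteq> 0" using less.prems(1) subspace_0 by blast
    define S where "S = V \<inter> sphere 0 1"
    have "closed V" using less.prems(1) by (simp add: closed_subspace)
    hence cS: "compact S" unfolding S_def by (simp add: closed_Int_compact)
    have "v /\<^sub>R norm v \<in> S" unfolding S_def using v less.prems(1)
      by (simp add: subspace_scale)
    hence neS: "S \<noteq> {}" by blast
    have cont: "continuous_on S (\<lambda>x. x \<bullet> A x)"
      using lin by (intro continuous_intros linear_continuous_on) (simp add: linear_conv_bounded_linear)
    obtain x0 where x0S: "x0 \<in> S" and x0min: "\<And>x. x \<in> S \<Longrightarrow> x0 \<bullet> A x0 \<le> x \<bullet> A x"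
      using continuous_attains_inf[OF cS neS cont] by blast
    have x0V: "x0 \<in> V" and nx0: "norm x0 = 1" using x0S by (auto simp: S_def)
    have x0x0: "x0 \<bullet> x0 = 1" using nx0 by (simp add: norm_eq_1)
    define l where "l = x0 \<bullet> A x0"
    have ray: "l * (u \<bullet> u) \<le> u \<bullet> A u" if "u \<in> V" for u
    proof (cases "u = 0")
      case True then show ?thesis using linear_0[OF lin] by simp
    next
      case False
      have "u /\<^sub>R norm u \<in> S" unfolding S_def using that less.prems(1) False
        by (simp add: subspace_scale)
      hence "l \<le> (u /\<^sub>R norm u) \<bullet> A (u /\<^sub>R norm u)" using x0min l_def by blast
      also have "\<dots> = (u \<bullet> A u) / (norm u)^2"
        using linear_scale[OF lin] by (simp add: power2_eq_square field_simps)
      finally have "l \<le> (u \<bullet> A u) / (norm u)^2" .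
      moreover have "(norm u)^2 > 0" using False by simp
      ultimately have "l * (norm u)^2 \<le> u \<bullet> A u" by (simp add: pos_le_divide_eq)
      thus ?thesis by (simp add: power2_norm_eq_inner)
    qed
    have orth: "A x0 \<bullet> y = 0" if yV: "y \<in> V" and yo: "y \<bullet> x0 = 0" for y
    proof (rule quad_nonneg_lin[where d = "y \<bullet> A y - l * (y \<bullet> y)"])
      fix t :: real
      have "x0 + t *\<^sub>R y \<in> V" using yV x0V less.prems(1) by (simp add: subspace_add subspace_scale)
      hence h1: "l * ((x0 + t *\<^sub>R y) \<bullet> (x0 + t *\<^sub>R y)) \<le> (x0 + t *\<^sub>R y) \<bullet> A (x0 + t *\<^sub>R y)"
        by (rule ray)
      have h2: "(x0 + t *\<^sub>R y) \<bullet> (x0 + t *\<^sub>R y) = 1 + t^2 * (y \<bullet> y)"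
        using x0x0 yo by (simp add: inner_add_left inner_add_right inner_commute power2_eq_square)
      have h3: "(x0 + t *\<^sub>R y) \<bullet> A (x0 + t *\<^sub>R y) = l + 2 * t * (A x0 \<bullet> y) + t^2 * (y \<bullet> A y)"
        using linear_add[OF lin] linear_scale[OF lin] sym[of x0 y] inner_commute[of y "A x0"]
        by (simp add: l_def inner_add_left inner_add_right power2_eq_square algebra_simps)
      have "l * (1 + t^2 * (y \<bullet> y)) \<le> l + 2 * t * (A x0 \<bullet> y) + t^2 * (y \<bullet> A y)"
        using h1 unfolding h2 h3 .
      thus "0 \<le> 2 * t * (A x0 \<bullet> y) + t^2 * (y \<bullet> A y - l * (y \<bullet> y))"
        by (simp add: algebra_simps)
    qed
    have eig: "A x0 = l *\<^sub>R x0"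
    proof -
      define w where "w = A x0 - l *\<^sub>R x0"
      have "A x0 \<in> V" using less.prems(2) x0V by blast
      hence wV: "w \<in> V" unfolding w_def using x0V less.prems(1) by (simp add: subspace_diff subspace_scale)
      have wo: "w \<bullet> x0 = 0" unfolding w_def using x0x0 by (simp add: inner_diff_left l_def inner_commute[of "A x0" x0])
      have "A x0 \<bullet> w = 0" by (rule orth[OF wV wo])
      hence "w \<bullet> w = 0" using wo unfolding w_def by (simp add: inner_diff_left inner_commute)
      thus ?thesis unfolding w_def by simp
    qed
    define V' where "V' = {y \<in> V. y \<bullet> x0 = 0}"
    have sV': "subspace V'" unfolding V'_def subspace_def using less.prems(1)
      by (auto simp: subspace_def inner_add_left)
    have AV': "A ` V' \<subseteq> V'"
    proof
      fix z assume "z \<in> A ` V'"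
      then obtain y where y: "y \<in> V'" "z = A y" by blast
      have "A y \<bullet> x0 = y \<bullet> A x0" by (rule sym)
      also have "\<dots> = 0" using y(1) eig by (simp add: V'_def inner_commute)
      finally show "z \<in> V'" using y less.prems(2) by (auto simp: V'_def)
    qed
    have "x0 \<notin> V'" using x0x0 by (simp add: V'_def)
    hence "V' \<subset> V" using x0V unfolding V'_def by blast
    hence "span V' \<subset> span V" using sV' less.prems(1) by (metis span_eq_iff)
    hence "dim V' < dim V" by (rule dim_psubset)
    then obtain B' where B': "finite B'" "B' \<subseteq> V'" "\<forall>b\<in>B'. norm b = 1" "pairwise orthogonal B'"
       "span B' = V'" "\<forall>b\<in>B'. A b = (b \<bullet> A b) *\<^sub>R b"
      using less.hyps[OF _ sV' AV'] by blast
    have x0nB': "x0 \<notin> B'" using B'(2) x0x0 by (auto simp: V'_def)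
    show ?thesis
    proof (intro exI[of _ "insert x0 B'"] conjI)
      show "finite (insert x0 B')" using B'(1) by simp
      show "insert x0 B' \<subseteq> V" using B'(2) x0V by (auto simp: V'_def)
      show "\<forall>b\<in>insert x0 B'. norm b = 1" using B'(3) nx0 by simp
      show "pairwise orthogonal (insert x0 B')"
        using B'(4) B'(2) unfolding pairwise_insert
        by (auto simp: V'_def orthogonal_def inner_commute)
      show "\<forall>b\<in>insert x0 B'. A b = (b \<bullet> A b) *\<^sub>R b"
        using B'(6) eig x0x0 by (simp add: l_def)
      show "span (insert x0 B') = V"
      proof
        show "span (insert x0 B') \<subseteq> V"
          using \<open>insert x0 B' \<subseteq> V\<close> less.prems(1) by (simp add: span_minimal)
        show "V \<subseteq> span (insert x0 B')"
        proof
          fix u assume uV: "u \<in> V"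
          have "u - (u \<bullet> x0) *\<^sub>R x0 \<in> V'" unfolding V'_def using uV x0V x0x0 less.prems(1)
            by (simp add: subspace_diff subspace_scale inner_diff_left)
          hence "u - (u \<bullet> x0) *\<^sub>R x0 \<in> span B'" using B'(5) by simp
          thus "u \<in> span (insert x0 B')" using span_breakdown_eq by blast
        qed
      qed
    qed
  qed
qed

lemma onb_coeff:
  fixes B :: "'a::real_inner set"
  assumes "finite B" "\<forall>b\<in>B. norm b = 1" "pairwise orthogonal B" "c \<in> B"
  shows "(\<Sum>b\<in>B. f b *\<^sub>R b) \<bullet> c = f c"
proof -
  have "(\<Sum>b\<in>B. f b *\<^sub>R b) \<bullet> c = (\<Sum>b\<in>B. f b * (b \<bullet> c))" by (simp add: inner_sum_left)
  also have "\<dots> = f c * (c \<bullet> c) + (\<Sum>b\<in>B-{c}. f b * (b \<bullet> c))"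
    using sum.remove[OF assms(1) assms(4)] by simp
  also have "(\<Sum>b\<in>B-{c}. f b * (b \<bullet> c)) = 0"
    using assms(3,4) by (intro sum.neutral) (auto simp: pairwise_def orthogonal_def)
  also have "c \<bullet> c = 1" using assms(2,4) by (simp add: norm_eq_1)
  finally show ?thesis by simp
qed

lemma onb_expand:
  fixes B :: "'a::euclidean_space set"
  assumes "finite B" "\<forall>b\<in>B. norm b = 1" "pairwise orthogonal B" "span B = UNIV"
  shows "x = (\<Sum>b\<in>B. (x \<bullet> b) *\<^sub>R b)"
proof -
  have "x \<in> span B" using assms(4) by simp
  then obtain u where x: "x = (\<Sum>v\<in>B. u v *\<^sub>R v)" using span_finite[OF assms(1)] by auto
  have "x \<bullet> b = u b" if "b \<in> B" for b
    unfolding x by (rule onb_coeff[OF assms(1-3) that])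
  thus ?thesis using x by (auto intro: sum.cong)
qed

lemma onb_inner:
  fixes B :: "'a::euclidean_space set"
  assumes "finite B" "\<forall>b\<in>B. norm b = 1" "pairwise orthogonal B" "span B = UNIV"
  shows "x \<bullet> y = (\<Sum>b\<in>B. (x \<bullet> b) * (y \<bullet> b))"
proof -
  have "x \<bullet> y = (\<Sum>b\<in>B. (x \<bullet> b) *\<^sub>R b) \<bullet> y" using onb_expand[OF assms, of x] by simp
  also have "\<dots> = (\<Sum>b\<in>B. (x \<bullet> b) * (b \<bullet> y))" by (simp add: inner_sum_left)
  also have "\<dots> = (\<Sum>b\<in>B. (x \<bullet> b) * (y \<bullet> b))" by (intro sum.cong refl) (simp add: inner_commute)
  finally show ?thesis .
qed

lemma spectral:
  fixes A :: "'a::euclidean_space \<Rightarrow> 'a"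
  assumes lin: "linear A" and sym: "\<And>x y. A x \<bullet> y = x \<bullet> A y"
  obtains B where "finite B" "\<forall>b\<in>B. norm b = 1" "pairwise orthogonal B" "span B = UNIV"
     "\<forall>b\<in>B. A b = (b \<bullet> A b) *\<^sub>R b"
  using spectral_subspace[OF lin sym, of UNIV] by auto

lemma psd_sqrt_ex1:
  fixes L :: "'a::euclidean_space \<Rightarrow> 'a"
  assumes lin: "linear L" and sym: "\<And>x y. L x \<bullet> y = x \<bullet> L y" and psd: "\<And>x. 0 \<le> L x \<bullet> x"
  shows "\<exists>!S. linear S \<and> (\<forall>x y. S x \<bullet> y = x \<bullet> S y) \<and> (\<forall>x. 0 \<le> S x \<bullet> x) \<and> (\<forall>x. S (S x) = L x)"
proof -
  obtain B where B: "finite B" "\<forall>b\<in>B. norm b = 1" "pairwise orthogonal B" "span B = UNIV"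
     "\<forall>b\<in>B. L b = (b \<bullet> L b) *\<^sub>R b"
    using spectral[OF lin sym] by blast
  define \<mu> where "\<mu> b = b \<bullet> L b" for b
  have mu0: "0 \<le> \<mu> b" for b using psd[of b] by (simp add: \<mu>_def inner_commute)
  have Lb: "b \<in> B \<Longrightarrow> L b = \<mu> b *\<^sub>R b" for b using B(5) by (simp add: \<mu>_def)
  define S where "S x = (\<Sum>b\<in>B. (sqrt (\<mu> b) * (x \<bullet> b)) *\<^sub>R b)" for x
  have Sc: "S x \<bullet> c = sqrt (\<mu> c) * (x \<bullet> c)" if "c \<in> B" for x c
    unfolding S_def by (rule onb_coeff[OF B(1-3) that])
  have exp: "x = (\<Sum>b\<in>B. (x \<bullet> b) *\<^sub>R b)" for x by (rule onb_expand[OF B(1-4)])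
  have linS: "linear S"
    unfolding S_def
    by (auto intro!: linearI simp: inner_add_left algebra_simps sum.distrib scaleR_sum_right)
  have symS: "S x \<bullet> y = x \<bullet> S y" for x y
    unfolding S_def by (simp add: inner_sum_left inner_sum_right inner_commute mult.commute mult.left_commute)
  have psdS: "0 \<le> S x \<bullet> x" for x
  proof -
    have "S x \<bullet> x = (\<Sum>b\<in>B. sqrt (\<mu> b) * (x \<bullet> b) * (b \<bullet> x))" by (simp add: S_def inner_sum_left)
    also have "\<dots> = (\<Sum>b\<in>B. sqrt (\<mu> b) * (x \<bullet> b)^2)"
      by (intro sum.cong refl) (simp add: inner_commute power2_eq_square)
    also have "\<dots> \<ge> 0" by (intro sum_nonneg) (simp add: mu0)
    finally show ?thesis .
  qed
  have SS: "S (S x) = L x" for x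
  proof -
    have "S (S x) = (\<Sum>b\<in>B. (\<mu> b * (x \<bullet> b)) *\<^sub>R b)"
      unfolding S_def[of "S x"] using Sc mu0 by (intro sum.cong) (auto simp: mult.assoc[symmetric])
    also have "\<dots> = (\<Sum>b\<in>B. (x \<bullet> b) *\<^sub>R L b)" using Lb by (intro sum.cong) auto
    also have "\<dots> = L (\<Sum>b\<in>B. (x \<bullet> b) *\<^sub>R b)" by (simp add: linear_sum[OF lin] linear_scale[OF lin])
    also have "\<dots> = L x" using exp[of x] by simp
    finally show ?thesis .
  qed
  have uniq: "T = S" if lT: "linear T" and sT: "\<forall>x y. T x \<bullet> y = x \<bullet> T y"
     and pT: "\<forall>x. 0 \<le> T x \<bullet> x" and TT: "\<forall>x. T (T x) = L x" for T
  proof -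
    have Tb: "T b = sqrt (\<mu> b) *\<^sub>R b" if bB: "b \<in> B" for b
    proof -
      define m where "m = sqrt (\<mu> b)"
      have m0: "0 \<le> m" by (simp add: m_def mu0)
      have TTb: "T (T b) = (m * m) *\<^sub>R b" using TT Lb[OF bB] mu0[of b] by (simp add: m_def)
      show ?thesis
      proof (cases "m = 0")
        case True
        have "T b \<bullet> T b = T (T b) \<bullet> b" using sT by simp
        also have "\<dots> = 0" using TTb True by simp
        finally show ?thesis using True by (simp add: m_def)
      next
        case False
        define u where "u = T b - m *\<^sub>R b"
        have "T u = T (T b) - m *\<^sub>R T b" unfolding u_def
          by (simp add: linear_diff[OF lT] linear_scale[OF lT])
        also have "\<dots> = - m *\<^sub>R u" unfolding u_def TTb by (simp add: algebra_simps)
        finally have "T u = - m *\<^sub>R u" .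
        hence "0 \<le> - m * (u \<bullet> u)" using pT[rule_format, of u] by simp
        moreover have "m > 0" using m0 False by simp
        ultimately have "u \<bullet> u \<le> 0" by (simp add: mult_le_0_iff)
        hence "u = 0" by (metis inner_ge_zero inner_eq_zero_iff order_antisym)
        thus ?thesis by (simp add: u_def m_def)
      qed
    qed
    show ?thesis
    proof
      fix x
      have "T x = T (\<Sum>b\<in>B. (x \<bullet> b) *\<^sub>R b)" using exp[of x] by simp
      also have "\<dots> = (\<Sum>b\<in>B. (x \<bullet> b) *\<^sub>R T b)" by (simp add: linear_sum[OF lT] linear_scale[OF lT])
      also have "\<dots> = S x" unfolding S_def using Tb by (intro sum.cong) auto
      finally show "T x = S x" .
    qed
  qed
  show ?thesis
    apply (rule ex1I[of _ S])
    using linS symS psdS SS apply blast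
    using uniq by blast
qed

lemma W_sym:
  fixes W :: "real^'n^'n"
  assumes "transpose W = W"
  shows "(W *v x) \<bullet> y = x \<bullet> (W *v y)"
proof -
  have "W *v x = x v* W" using vector_transpose_matrix[of x W] assms by simp
  thus ?thesis by (simp add: dot_lmul_matrix)
qed

lemma W_facts:
  fixes W :: "real^'n^'n"
  assumes sym: "transpose W = W" and pd: "\<And>v. v \<noteq> 0 \<Longrightarrow> v \<bullet> (W *v v) > 0"
    and le: "\<And>v. v \<bullet> (W *v v) \<le> v \<bullet> v"
  shows "0 < lambda_min W" "lambda_min W \<le> 1" "\<And>v. lambda_min W * (v \<bullet> v) \<le> v \<bullet> (W *v v)"
proof -
  have symW: "\<And>x y. (W *v x) \<bullet> y = x \<bullet> (W *v y)" using W_sym[OF sym] .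
  have linW: "linear ((*v) W)" by (rule matrix_vector_mul_linear)
  obtain B where B: "finite B" "\<forall>b\<in>B. norm b = 1" "pairwise orthogonal B" "span B = UNIV"
     "\<forall>b\<in>B. W *v b = (b \<bullet> (W *v b)) *\<^sub>R b"
    using spectral[OF linW symW] by blast
  define E where "E = {l. \<exists>v. v \<noteq> 0 \<and> W *v v = l *\<^sub>R v}"
  have lm: "lambda_min W = Min E" unfolding lambda_min_def E_def ..
  have sub: "E \<subseteq> (\<lambda>b. b \<bullet> (W *v b)) ` B"
  proof
    fix l assume "l \<in> E"
    then obtain v where v: "v \<noteq> 0" "W *v v = l *\<^sub>R v" by (auto simp: E_def)
    have "\<exists>b\<in>B. v \<bullet> b \<noteq> 0"
    proof (rule ccontr)
      assume "\<not> ?thesis"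
      hence z: "\<forall>b\<in>B. v \<bullet> b = 0" by auto
      have "v = (\<Sum>b\<in>B. (v \<bullet> b) *\<^sub>R b)" using onb_expand[OF B(1-4)] by blast
      also have "\<dots> = 0" using z by simp
      finally have "v = 0" .
      thus False using v by simp
    qed
    then obtain b where b: "b \<in> B" "v \<bullet> b \<noteq> 0" by blast
    have "l * (v \<bullet> b) = (W *v v) \<bullet> b" using v by simp
    also have "\<dots> = v \<bullet> (W *v b)" by (rule symW)
    also have "\<dots> = (b \<bullet> (W *v b)) * (v \<bullet> b)" using B(5) b(1) by (metis inner_scaleR_right)
    finally have "l = b \<bullet> (W *v b)" using b(2) by simp
    thus "l \<in> (\<lambda>b. b \<bullet> (W *v b)) ` B" using b(1) by blast
  qed
  have finE: "finite E" using sub B(1) finite_surj by blast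
  have Bne: "B \<noteq> {}"
  proof
    assume "B = {}"
    hence "(UNIV :: (real^'n) set) = {0}" using B(4) by simp
    moreover have "(\<chi> i. 1) \<noteq> (0 :: real^'n)" by (simp add: vec_eq_iff)
    ultimately show False by blast
  qed
  have muE: "b \<bullet> (W *v b) \<in> E" if "b \<in> B" for b
  proof -
    have "b \<noteq> 0" using B(2) that by auto
    thus ?thesis using B(5) that unfolding E_def by blast
  qed
  have Ene: "E \<noteq> {}" using Bne muE by blast
  have lE: "lambda_min W \<in> E" unfolding lm using finE Ene by (rule Min_in)
  then obtain v where v: "v \<noteq> 0" "W *v v = lambda_min W *\<^sub>R v" by (auto simp: E_def)
  have vv: "v \<bullet> v > 0" using v(1) by simp
  have "v \<bullet> (W *v v) = lambda_min W * (v \<bullet> v)" using v(2) by simp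
  thus "0 < lambda_min W" using pd[OF v(1)] vv by (simp add: zero_less_mult_iff)
  show "lambda_min W \<le> 1" using le[of v] \<open>v \<bullet> (W *v v) = lambda_min W * (v \<bullet> v)\<close> vv by simp
  fix x :: "real^'n"
  have lmin: "lambda_min W \<le> b \<bullet> (W *v b)" if "b \<in> B" for b
    unfolding lm using finE muE[OF that] by (rule Min_le)
  have "lambda_min W * (x \<bullet> x) = (\<Sum>b\<in>B. lambda_min W * ((x \<bullet> b) * (x \<bullet> b)))"
    using onb_inner[OF B(1-4), of x x] by (simp add: sum_distrib_left)
  also have "\<dots> \<le> (\<Sum>b\<in>B. (x \<bullet> b) * ((W *v x) \<bullet> b))"
  proof (rule sum_mono)
    fix b assume bB: "b \<in> B"
    have "(W *v x) \<bullet> b = x \<bullet> (W *v b)" by (rule symW)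
    also have "\<dots> = (b \<bullet> (W *v b)) * (x \<bullet> b)" using B(5) bB by (metis inner_scaleR_right)
    finally have e: "(W *v x) \<bullet> b = (b \<bullet> (W *v b)) * (x \<bullet> b)" .
    have "lambda_min W * ((x \<bullet> b) * (x \<bullet> b)) \<le> (b \<bullet> (W *v b)) * ((x \<bullet> b) * (x \<bullet> b))"
      using lmin[OF bB] by (intro mult_right_mono) simp_all
    also have "\<dots> = (x \<bullet> b) * ((W *v x) \<bullet> b)" unfolding e by (simp add: mult_ac)
    finally show "lambda_min W * ((x \<bullet> b) * (x \<bullet> b)) \<le> (x \<bullet> b) * ((W *v x) \<bullet> b)" .
  qed
  also have "\<dots> = x \<bullet> (W *v x)" using onb_inner[OF B(1-4), of x "W *v x"] by simp
  finally show "lambda_min W * (x \<bullet> x) \<le> x \<bullet> (W *v x)" .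
qed

lemma l1:
  fixes W :: "real^'n^'n" and x y :: "('p::finite,'q::finite,'n::finite) stack"
  shows "(\<Sum>n\<in>UNIV. \<Sum>m\<in>UNIV. W$n$m * ((x$n \<bullet> b) * (y$m \<bullet> b))) = (\<chi> n. x$n \<bullet> b) \<bullet> (W *v (\<chi> n. y$n \<bullet> b))"
proof -
  have "(\<chi> n. x$n \<bullet> b) \<bullet> (W *v (\<chi> n. y$n \<bullet> b)) = (\<Sum>n\<in>UNIV. (x$n \<bullet> b) * (\<Sum>m\<in>UNIV. W$n$m * (y$m \<bullet> b)))"
    unfolding inner_vec_def matrix_vector_mult_def by simp
  also have "\<dots> = (\<Sum>n\<in>UNIV. \<Sum>m\<in>UNIV. W$n$m * ((x$n \<bullet> b) * (y$m \<bullet> b)))"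
    by (simp add: sum_distrib_left mult.left_commute)
  finally show ?thesis by simp
qed
lemma l2:
  fixes x y :: "('p::finite,'q::finite,'n::finite) stack"
  shows "(\<Sum>b\<in>Basis. \<Sum>n\<in>UNIV. (x$n \<bullet> b) * (y$n \<bullet> b)) = (\<Sum>b\<in>Basis. (\<chi> n. x$n \<bullet> b) \<bullet> (\<chi> n. y$n \<bullet> b))"
  unfolding inner_vec_def by simp

lemma kron_bilin:
  fixes W :: "real^'n^'n" and x y :: "('p::finite,'q::finite,'n::finite) stack"
  shows "x \<bullet> kron_I W y = (\<Sum>b\<in>Basis. (\<chi> n. x$n \<bullet> b) \<bullet> (W *v (\<chi> n. y$n \<bullet> b)))"
proof -
  have "x \<bullet> kron_I W y = (\<Sum>n\<in>UNIV. \<Sum>m\<in>UNIV. W$n$m * (x$n \<bullet> y$m))"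
    by (simp add: kron_I_def inner_vec_def inner_sum_right)
  also have "\<dots> = (\<Sum>n\<in>UNIV. \<Sum>m\<in>UNIV. \<Sum>b\<in>Basis. W$n$m * ((x$n \<bullet> b) * (y$m \<bullet> b)))"
    by (simp add: euclidean_inner[of "x$_" "y$_"] sum_distrib_left)
  also have "\<dots> = (\<Sum>n\<in>UNIV. \<Sum>b\<in>Basis. \<Sum>m\<in>UNIV. W$n$m * ((x$n \<bullet> b) * (y$m \<bullet> b)))"
    by (intro sum.cong refl) (rule sum.swap)
  also have "\<dots> = (\<Sum>b\<in>Basis. \<Sum>n\<in>UNIV. \<Sum>m\<in>UNIV. W$n$m * ((x$n \<bullet> b) * (y$m \<bullet> b)))"
    by (rule sum.swap)
  also have "\<dots> = (\<Sum>b\<in>Basis. (\<chi> n. x$n \<bullet> b) \<bullet> (W *v (\<chi> n. y$n \<bullet> b)))"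
    by (intro sum.cong refl) (rule l1)
  finally show ?thesis .
qed

lemma stack_inner:
  fixes x y :: "('p::finite,'q::finite,'n::finite) stack"
  shows "x \<bullet> y = (\<Sum>b\<in>Basis. (\<chi> n. x$n \<bullet> b) \<bullet> (\<chi> n. y$n \<bullet> b))"
proof -
  have "x \<bullet> y = (\<Sum>n\<in>UNIV. x$n \<bullet> y$n)" by (rule inner_vec_def)
  also have "\<dots> = (\<Sum>n\<in>UNIV. \<Sum>b\<in>Basis. (x$n \<bullet> b) * (y$n \<bullet> b))"
    by (intro sum.cong refl) (rule euclidean_inner)
  also have "\<dots> = (\<Sum>b\<in>Basis. \<Sum>n\<in>UNIV. (x$n \<bullet> b) * (y$n \<bullet> b))"
    by (rule sum.swap)
  also have "\<dots> = (\<Sum>b\<in>Basis. (\<chi> n. x$n \<bullet> b) \<bullet> (\<chi> n. y$n \<bullet> b))"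
    by (rule l2)
  finally show ?thesis .
qed

lemma kron_linear: "linear (kron_I W :: ('p::finite,'q::finite,'n::finite) stack \<Rightarrow> _)"
  by (rule linearI) (simp_all add: kron_I_def vec_eq_iff scaleR_add_right sum.distrib scaleR_sum_right mult.commute)

lemma kron_sym:
  fixes W :: "real^'n^'n" and x y :: "('p::finite,'q::finite,'n::finite) stack"
  assumes "transpose W = W"
  shows "kron_I W x \<bullet> y = x \<bullet> kron_I W y"
proof -
  have "kron_I W x \<bullet> y = y \<bullet> kron_I W x" by (rule inner_commute)
  also have "\<dots> = (\<Sum>b\<in>Basis. (\<chi> n. y$n \<bullet> b) \<bullet> (W *v (\<chi> n. x$n \<bullet> b)))" by (rule kron_bilin)
  also have "\<dots> = (\<Sum>b\<in>Basis. (\<chi> n. x$n \<bullet> b) \<bullet> (W *v (\<chi> n. y$n \<bullet> b)))"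
  proof (intro sum.cong refl)
    fix b :: "(real^'p) \<times> (real^'q)"
    have "(\<chi> n. y$n \<bullet> b) \<bullet> (W *v (\<chi> n. x$n \<bullet> b)) = (W *v (\<chi> n. x$n \<bullet> b)) \<bullet> (\<chi> n. y$n \<bullet> b)"
      by (rule inner_commute)
    also have "\<dots> = (\<chi> n. x$n \<bullet> b) \<bullet> (W *v (\<chi> n. y$n \<bullet> b))" by (rule W_sym[OF assms])
    finally show "(\<chi> n. y$n \<bullet> b) \<bullet> (W *v (\<chi> n. x$n \<bullet> b)) = (\<chi> n. x$n \<bullet> b) \<bullet> (W *v (\<chi> n. y$n \<bullet> b))" .
  qed
  also have "\<dots> = x \<bullet> kron_I W y" by (rule kron_bilin[symmetric])
  finally show ?thesis .
qed

lemma kron_bounds: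
  fixes W :: "real^'n^'n" and x :: "('p::finite,'q::finite,'n::finite) stack"
  assumes sym: "transpose W = W" and pd: "\<And>v. v \<noteq> 0 \<Longrightarrow> v \<bullet> (W *v v) > 0"
    and le: "\<And>v. v \<bullet> (W *v v) \<le> v \<bullet> v"
  shows "lambda_min W * (x \<bullet> x) \<le> x \<bullet> kron_I W x" "x \<bullet> kron_I W x \<le> x \<bullet> x"
proof -
  have "lambda_min W * (x \<bullet> x) = (\<Sum>b\<in>Basis. lambda_min W * ((\<chi> n. x$n \<bullet> b) \<bullet> (\<chi> n. x$n \<bullet> b)))"
    by (simp add: stack_inner[of x x] sum_distrib_left)
  also have "\<dots> \<le> (\<Sum>b\<in>Basis. (\<chi> n. x$n \<bullet> b) \<bullet> (W *v (\<chi> n. x$n \<bullet> b)))"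
    by (intro sum_mono W_facts(3)[OF sym pd le])
  also have "\<dots> = x \<bullet> kron_I W x" by (rule kron_bilin[symmetric])
  finally show "lambda_min W * (x \<bullet> x) \<le> x \<bullet> kron_I W x" .
  have "x \<bullet> kron_I W x = (\<Sum>b\<in>Basis. (\<chi> n. x$n \<bullet> b) \<bullet> (W *v (\<chi> n. x$n \<bullet> b)))" by (rule kron_bilin)
  also have "\<dots> \<le> (\<Sum>b\<in>Basis. (\<chi> n. x$n \<bullet> b) \<bullet> (\<chi> n. x$n \<bullet> b))"
    by (intro sum_mono le)
  also have "\<dots> = x \<bullet> x" by (rule stack_inner[symmetric])
  finally show "x \<bullet> kron_I W x \<le> x \<bullet> x" .
qed

lemma U_props:
  fixes W :: "real^'n^'n"
  assumes sym: "transpose W = W" and pd: "\<And>v. v \<noteq> 0 \<Longrightarrow> v \<bullet> (W *v v) > 0"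
    and le: "\<And>v. v \<bullet> (W *v v) \<le> v \<bullet> v"
  shows "linear (Uop W :: ('p::finite,'q::finite,'n::finite) stack \<Rightarrow> _)"
    "\<And>x y :: ('p,'q,'n) stack. Uop W x \<bullet> y = x \<bullet> Uop W y"
    "\<And>x :: ('p,'q,'n) stack. Uop W (Uop W x) = x - kron_I W x"
proof -
  define L where "L = (\<lambda>z :: ('p,'q,'n) stack. z - kron_I W z)"
  have linL: "linear L" unfolding L_def
    by (rule linearI) (simp_all add: linear_add[OF kron_linear] linear_scale[OF kron_linear] algebra_simps)
  have symL: "L x \<bullet> y = x \<bullet> L y" for x y
    unfolding L_def using kron_sym[OF sym, of x y] by (simp add: inner_diff_left inner_diff_right inner_commute)
  have psdL: "0 \<le> L x \<bullet> x" for x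
  proof -
    have "L x \<bullet> x = x \<bullet> x - kron_I W x \<bullet> x" unfolding L_def by (rule inner_diff_left)
    also have "kron_I W x \<bullet> x = x \<bullet> kron_I W x" by (rule kron_sym[OF sym])
    finally show ?thesis using kron_bounds(2)[OF sym pd le, of x] by linarith
  qed
  have U: "Uop W = psd_sqrt L" unfolding Uop_def L_def ..
  have "linear (psd_sqrt L) \<and> (\<forall>x y. psd_sqrt L x \<bullet> y = x \<bullet> psd_sqrt L y) \<and> (\<forall>x. 0 \<le> psd_sqrt L x \<bullet> x)
        \<and> (\<forall>x. psd_sqrt L (psd_sqrt L x) = L x)"
    unfolding psd_sqrt_def by (rule theI'[OF psd_sqrt_ex1[OF linL symL psdL]])
  thus "linear (Uop W :: ('p::finite,'q::finite,'n::finite) stack \<Rightarrow> _)"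
    "\<And>x y :: ('p,'q,'n) stack. Uop W x \<bullet> y = x \<bullet> Uop W y"
    "\<And>x :: ('p,'q,'n) stack. Uop W (Uop W x) = x - kron_I W x"
    unfolding U by (simp_all add: L_def)
qed

lemma U_norm:
  fixes W :: "real^'n^'n"
  assumes sym: "transpose W = W" and pd: "\<And>v. v \<noteq> 0 \<Longrightarrow> v \<bullet> (W *v v) > 0"
    and le: "\<And>v. v \<bullet> (W *v v) \<le> v \<bullet> v"
  shows "norm (Uop W y :: ('p::finite,'q::finite,'n::finite) stack) \<le> sqrt (1 - lambda_min W) * norm y"
proof -
  have l1: "lambda_min W \<le> 1" using W_facts(2)[of W] sym pd le by blast
  have "(norm (Uop W y))^2 = Uop W y \<bullet> Uop W y" by (simp add: power2_norm_eq_inner)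
  also have "\<dots> = y \<bullet> Uop W (Uop W y)" by (rule U_props(2)[OF sym pd le])
  also have "\<dots> = y \<bullet> y - y \<bullet> kron_I W y" by (simp add: U_props(3)[OF sym pd le] inner_diff_right)
  also have "\<dots> \<le> (1 - lambda_min W) * (y \<bullet> y)"
    using kron_bounds(1)[OF sym pd le, of y] by (simp add: algebra_simps)
  also have "\<dots> = (sqrt (1 - lambda_min W) * norm y)^2"
    using l1 by (simp add: power_mult_distrib power2_norm_eq_inner)
  finally have "(norm (Uop W y))^2 \<le> (sqrt (1 - lambda_min W) * norm y)^2" .
  thus ?thesis by (rule power2_le_imp_le) (simp add: l1)
qed

lemma node_mono:
  fixes f :: "(real^'p::finite) \<times> (real^'q::finite) \<Rightarrow> real"
  assumes wcvx: "\<And>y. y \<in> Y \<Longrightarrow> weakly_convex_on \<rho> X (\<lambda>x. f (x, y)) (\<lambda>x. grad_x f x y)"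
    and wccv: "\<And>x. x \<in> X \<Longrightarrow> weakly_convex_on \<rho> Y (\<lambda>y. - f (x, y)) (\<lambda>y. - grad_y f x y)"
    and h: "h - Bn f u \<in> Rn X Y u" and h': "h' - Bn f u' \<in> Rn X Y u'"
  shows "(h - h') \<bullet> (u - u') \<ge> - \<rho> * (norm (u - u'))\<^sup>2"
proof -
  obtain x y where u: "u = (x, y)" by (cases u)
  obtain x' y' where u': "u' = (x', y')" by (cases u')
  define r where "r = h - Bn f u"
  define r' where "r' = h' - Bn f u'"
  have rx: "fst r \<in> normal_cone X x" and ry: "snd r \<in> normal_cone Y y"
    using h by (auto simp: r_def Rn_def u mem_Times_iff)
  have rx': "fst r' \<in> normal_cone X x'" and ry': "snd r' \<in> normal_cone Y y'"
    using h' by (auto simp: r'_def Rn_def u' mem_Times_iff)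
  have xX: "x \<in> X" using rx by (auto simp: normal_cone_def split: if_splits)
  have yY: "y \<in> Y" using ry by (auto simp: normal_cone_def split: if_splits)
  have xX': "x' \<in> X" using rx' by (auto simp: normal_cone_def split: if_splits)
  have yY': "y' \<in> Y" using ry' by (auto simp: normal_cone_def split: if_splits)
  have n1: "fst r \<bullet> (x' - x) \<le> 0" using rx xX xX' by (auto simp: normal_cone_def)
  have n2: "snd r \<bullet> (y' - y) \<le> 0" using ry yY yY' by (auto simp: normal_cone_def)
  have n3: "fst r' \<bullet> (x - x') \<le> 0" using rx' xX xX' by (auto simp: normal_cone_def)
  have n4: "snd r' \<bullet> (y - y') \<le> 0" using ry' yY yY' by (auto simp: normal_cone_def)
  define gx where "gx = grad_x f x y"
  define gx' where "gx' = grad_x f x' y'"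
  define gy where "gy = grad_y f x y"
  define gy' where "gy' = grad_y f x' y'"
  have a: "f (x', y) \<ge> f (x, y) + gx \<bullet> (x' - x) - \<rho> / 2 * (norm (x' - x))\<^sup>2"
    using wcvx[OF yY] xX xX' unfolding weakly_convex_on_def gx_def by blast
  have b: "f (x, y') \<ge> f (x', y') + gx' \<bullet> (x - x') - \<rho> / 2 * (norm (x - x'))\<^sup>2"
    using wcvx[OF yY'] xX xX' unfolding weakly_convex_on_def gx'_def by blast
  have c: "- f (x, y') \<ge> - f (x, y) + (- gy) \<bullet> (y' - y) - \<rho> / 2 * (norm (y' - y))\<^sup>2"
    using wccv[OF xX] yY yY' unfolding weakly_convex_on_def gy_def by blast
  have d: "- f (x', y) \<ge> - f (x', y') + (- gy') \<bullet> (y - y') - \<rho> / 2 * (norm (y - y'))\<^sup>2"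
    using wccv[OF xX'] yY yY' unfolding weakly_convex_on_def gy'_def by blast
  have nx: "norm (x' - x) = norm (x - x')" by (rule norm_minus_commute)
  have ny: "norm (y' - y) = norm (y - y')" by (rule norm_minus_commute)
  have ix: "gx \<bullet> (x' - x) = - (gx \<bullet> (x - x'))" by (simp add: inner_diff_right)
  have iy: "(- gy) \<bullet> (y' - y) = gy \<bullet> (y - y')" by (simp add: inner_diff_right)
  have iy': "(- gy') \<bullet> (y - y') = - (gy' \<bullet> (y - y'))" by simp
  have B: "(gx - gx') \<bullet> (x - x') - (gy - gy') \<bullet> (y - y') \<ge> - \<rho> * ((norm (x - x'))\<^sup>2 + (norm (y - y'))\<^sup>2)"
    using a b c d unfolding nx ny ix iy iy' by (simp add: inner_diff_left algebra_simps)
  have R: "(r - r') \<bullet> (u - u') \<ge> 0"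
    using n1 n2 n3 n4 unfolding u u'
    by (cases r, cases r') (simp add: inner_diff_left inner_diff_right algebra_simps)
  have "h - h' = (Bn f u - Bn f u') + (r - r')" by (simp add: r_def r'_def)
  hence "(h - h') \<bullet> (u - u') = (Bn f u - Bn f u') \<bullet> (u - u') + (r - r') \<bullet> (u - u')"
    by (simp add: inner_add_left)
  also have "(Bn f u - Bn f u') \<bullet> (u - u') = (gx - gx') \<bullet> (x - x') - (gy - gy') \<bullet> (y - y')"
    by (simp add: u u' Bn_def gx_def gx'_def gy_def gy'_def inner_diff_left)
  finally have "(h - h') \<bullet> (u - u') \<ge> - \<rho> * ((norm (x - x'))\<^sup>2 + (norm (y - y'))\<^sup>2)"
    using B R by linarith
  moreover have "(norm (u - u'))\<^sup>2 = (norm (x - x'))\<^sup>2 + (norm (y - y'))\<^sup>2"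
    by (simp add: u u' norm_Pair)
  ultimately show ?thesis by simp
qed

lemma BR_mono:
  fixes f :: "'n::finite \<Rightarrow> (real^'p::finite) \<times> (real^'q::finite) \<Rightarrow> real"
  assumes wcvx: "\<And>n y. y \<in> Y \<Longrightarrow> weakly_convex_on \<rho> X (\<lambda>x. f n (x, y)) (\<lambda>x. grad_x (f n) x y)"
    and wccv: "\<And>n x. x \<in> X \<Longrightarrow> weakly_convex_on \<rho> Y (\<lambda>y. - f n (x, y)) (\<lambda>y. - grad_y (f n) x y)"
  shows "weakly_monotone \<rho> (BR f X Y)"
  unfolding weakly_monotone_def
proof (intro allI impI)
  fix z z' g g' :: "('p,'q,'n) stack"
  assume g: "g \<in> BR f X Y z" and g': "g' \<in> BR f X Y z'"
  have "(g - g') \<bullet> (z - z') = (\<Sum>n\<in>UNIV. (g$n - g'$n) \<bullet> (z$n - z'$n))" by (simp add: inner_vec_def)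
  also have "\<dots> \<ge> (\<Sum>n\<in>UNIV. - \<rho> * (norm (z$n - z'$n))\<^sup>2)"
    using g g' by (intro sum_mono node_mono[OF wcvx wccv]) (auto simp: BR_def)
  also have "(\<Sum>n\<in>UNIV. - \<rho> * (norm (z$n - z'$n))\<^sup>2) = - \<rho> * (norm (z - z'))\<^sup>2"
    by (simp add: power2_norm_eq_inner inner_vec_def sum_distrib_left)
  finally show "(g - g') \<bullet> (z - z') \<ge> - \<rho> * (norm (z - z'))\<^sup>2" .
qed

lemma fo_lemma:
  fixes k :: "real \<Rightarrow> real"
  assumes der: "(k has_real_derivative D) (at 0)"
    and le: "\<And>t. 0 < t \<Longrightarrow> t \<le> 1 \<Longrightarrow> k 0 \<le> k t + t^2 * C"
  shows "0 \<le> D"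
proof (rule ccontr)
  assume "\<not> 0 \<le> D"
  hence D0: "D < 0" by simp
  have q: "((\<lambda>t. t^2 * C) has_real_derivative 0) (at 0)"
    by (auto intro!: derivative_eq_intros)
  have "((\<lambda>t. k t + t^2 * C) has_real_derivative (D + 0)) (at 0)"
    by (rule DERIV_add[OF der q])
  hence "((\<lambda>t. k t + t^2 * C) has_real_derivative D) (at 0)" by simp
  from DERIV_neg_dec_right[OF this D0] obtain d where d: "d > 0"
    and dd: "\<And>h. h > 0 \<Longrightarrow> h < d \<Longrightarrow> k 0 + 0^2 * C > k (0 + h) + (0 + h)^2 * C" by blast
  define h where "h = min (d/2) 1"
  have "h > 0" "h < d" "h \<le> 1" using d by (auto simp: h_def)
  hence "k 0 > k h + h^2 * C" using dd[of h] by simp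
  moreover have "k 0 \<le> k h + h^2 * C" using le \<open>h > 0\<close> \<open>h \<le> 1\<close> by blast
  ultimately show False by simp
qed

lemma f_dir_deriv:
  fixes f :: "'a::real_normed_vector \<Rightarrow> real"
  assumes "f differentiable (at p)"
  shows "((\<lambda>t. f (p + t *\<^sub>R v)) has_real_derivative frechet_derivative f (at p) v) (at 0)"
proof -
  define L where "L = frechet_derivative f (at p)"
  have fd: "(f has_derivative L) (at p)" using assms frechet_derivative_works L_def by blast
  have linL: "linear L" using fd has_derivative_linear by blast
  have l: "((\<lambda>t. p + t *\<^sub>R v) has_derivative (\<lambda>t. t *\<^sub>R v)) (at 0)"
    by (auto intro!: derivative_eq_intros)
  have fd': "(f has_derivative L) (at (p + 0 *\<^sub>R v))" using fd by simp
  have der: "((\<lambda>t. f (p + t *\<^sub>R v)) has_derivative (\<lambda>t. L (t *\<^sub>R v))) (at 0)"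
    by (rule has_derivative_compose[OF l fd'])
  have eq: "(\<lambda>t. L (t *\<^sub>R v)) = (*) (L v)" using linear_scale[OF linL] by (auto simp: fun_eq_iff)
  have "((\<lambda>t. f (p + t *\<^sub>R v)) has_derivative (*) (L v)) (at 0)" using der unfolding eq .
  thus ?thesis unfolding has_field_derivative_def L_def .
qed

lemma grad_x_inner:
  fixes f :: "(real^'p::finite) \<times> (real^'q::finite) \<Rightarrow> real"
  assumes "f differentiable (at (x, y))"
  shows "grad_x f x y \<bullet> d = frechet_derivative f (at (x, y)) (d, 0)"
proof -
  define L where "L = frechet_derivative f (at (x, y))"
  have linL: "linear L" using assms frechet_derivative_works has_derivative_linear L_def by blast
  define M where "M v = L (v, 0)" for v
  have linM: "linear M"
  proof (rule linearI)
    fix a b show "M (a + b) = M a + M b" unfolding M_def using linear_add[OF linL, of "(a, 0)" "(b, 0)"] by simp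
  next
    fix r a show "M (r *\<^sub>R a) = r *\<^sub>R M a" unfolding M_def using linear_scale[OF linL, of r "(a, 0)"] by simp
  qed
  have "grad_x f x y \<bullet> d = (\<Sum>i\<in>Basis. M i * (i \<bullet> d))"
    unfolding grad_x_def M_def L_def by (simp add: inner_sum_left)
  also have "\<dots> = M (\<Sum>i\<in>Basis. (d \<bullet> i) *\<^sub>R i)"
    by (simp add: linear_sum[OF linM] linear_scale[OF linM] inner_commute mult.commute)
  also have "\<dots> = M d" by (simp add: euclidean_representation)
  finally show ?thesis by (simp add: M_def L_def)
qed

lemma grad_y_inner:
  fixes f :: "(real^'p::finite) \<times> (real^'q::finite) \<Rightarrow> real"
  assumes "f differentiable (at (x, y))"
  shows "grad_y f x y \<bullet> d = frechet_derivative f (at (x, y)) (0, d)"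
proof -
  define L where "L = frechet_derivative f (at (x, y))"
  have linL: "linear L" using assms frechet_derivative_works has_derivative_linear L_def by blast
  define M where "M v = L (0, v)" for v
  have linM: "linear M"
  proof (rule linearI)
    fix a b show "M (a + b) = M a + M b" unfolding M_def using linear_add[OF linL, of "(0, a)" "(0, b)"] by simp
  next
    fix r a show "M (r *\<^sub>R a) = r *\<^sub>R M a" unfolding M_def using linear_scale[OF linL, of r "(0, a)"] by simp
  qed
  have "grad_y f x y \<bullet> d = (\<Sum>i\<in>Basis. M i * (i \<bullet> d))"
    unfolding grad_y_def M_def L_def by (simp add: inner_sum_left)
  also have "\<dots> = M (\<Sum>i\<in>Basis. (d \<bullet> i) *\<^sub>R i)"
    by (simp add: linear_sum[OF linM] linear_scale[OF linM] inner_commute mult.commute)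
  also have "\<dots> = M d" by (simp add: euclidean_representation)
  finally show ?thesis by (simp add: M_def L_def)
qed

lemma half_half: "(1/2) *\<^sub>R a + (1/2) *\<^sub>R a = (a::'a::real_vector)"
  by (simp flip: scaleR_add_left)

lemma saddle_exists:
  fixes F :: "'x::euclidean_space \<Rightarrow> 'y::euclidean_space \<Rightarrow> real"
    and Gx :: "'x \<Rightarrow> 'y \<Rightarrow> 'x" and Gy :: "'x \<Rightarrow> 'y \<Rightarrow> 'y"
  assumes Xne: "X \<noteq> {}" and Xc: "convex X" and Xk: "compact X"
    and Yne: "Y \<noteq> {}" and Yc: "convex Y" and Yk: "compact Y"
    and Fc: "continuous_on (X \<times> Y) (\<lambda>p. F (fst p) (snd p))"
    and mu0: "\<mu> > 0"
    and E1: "\<And>x x' y. x \<in> X \<Longrightarrow> x' \<in> X \<Longrightarrow> y \<in> Y \<Longrightarrow>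
               F x' y \<ge> F x y + Gx x y \<bullet> (x' - x) + \<mu> / 2 * (norm (x' - x))\<^sup>2"
    and E2: "\<And>x y y'. x \<in> X \<Longrightarrow> y \<in> Y \<Longrightarrow> y' \<in> Y \<Longrightarrow>
               F x y' \<le> F x y + Gy x y \<bullet> (y' - y) - \<mu> / 2 * (norm (y' - y))\<^sup>2"
  shows "\<exists>xs\<in>X. \<exists>ys\<in>Y. (\<forall>x\<in>X. F xs ys \<le> F x ys) \<and> (\<forall>y\<in>Y. F xs y \<le> F xs ys)"
proof -
  define Fp where "Fp p = F (fst p) (snd p)" for p
  have nnX: "0 \<le> \<mu> / 2 * (norm v)\<^sup>2" for v :: 'x using mu0 by simp
  have nnY: "0 \<le> \<mu> / 2 * (norm v)\<^sup>2" for v :: 'y using mu0 by simp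
  have Fxc: "continuous_on X (\<lambda>x. F x y)" if "y \<in> Y" for y
  proof -
    have "continuous_on X (\<lambda>x. Fp (x, y))"
      using that by (intro continuous_on_compose2[OF Fc[folded Fp_def]]) (auto intro!: continuous_intros)
    thus ?thesis by (simp add: Fp_def)
  qed
  have exmin: "\<exists>x. x \<in> X \<and> (\<forall>x'\<in>X. F x y \<le> F x' y)" if "y \<in> Y" for y
    using continuous_attains_inf[OF Xk Xne Fxc[OF that]] by blast
  define xm where "xm y = (SOME x. x \<in> X \<and> (\<forall>x'\<in>X. F x y \<le> F x' y))" for y
  have xm: "xm y \<in> X" "\<And>x'. x' \<in> X \<Longrightarrow> F (xm y) y \<le> F x' y" if "y \<in> Y" for y
    using someI_ex[OF exmin[OF that]] unfolding xm_def[symmetric] by blast+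
  have sc: "F a y \<ge> F (xm y) y + \<mu> / 4 * (norm (a - xm y))\<^sup>2" if yY: "y \<in> Y" and aX: "a \<in> X" for y a
  proof -
    define b where "b = xm y"
    have bX: "b \<in> X" using xm(1)[OF yY] by (simp add: b_def)
    define m where "m = (1/2) *\<^sub>R a + (1/2) *\<^sub>R b"
    have mX: "m \<in> X" unfolding m_def by (rule convexD[OF Xc aX bX]) simp_all
    have v1: "a - m = (1/2) *\<^sub>R (a - b)" by (simp add: m_def algebra_simps half_half)
    have v2: "b - m = - ((1/2) *\<^sub>R (a - b))" by (simp add: m_def algebra_simps half_half)
    have i1: "F a y \<ge> F m y + (1/2) * (Gx m y \<bullet> (a - b)) + \<mu> / 8 * (norm (a - b))\<^sup>2"
      using E1[OF mX aX yY] unfolding v1 by (simp add: power_divide)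
    have i2: "F b y \<ge> F m y - (1/2) * (Gx m y \<bullet> (a - b)) + \<mu> / 8 * (norm (a - b))\<^sup>2"
      using E1[OF mX bX yY] unfolding v2 by (simp add: power_divide)
    have "F b y \<le> F m y" using xm(2)[OF yY mX] by (simp add: b_def)
    hence "F a y \<ge> F b y + \<mu> / 4 * (norm (a - b))\<^sup>2" using i1 i2 by linarith
    thus ?thesis by (simp add: b_def)
  qed
  define \<phi> where "\<phi> y = F (xm y) y" for y
  have ucF: "uniformly_continuous_on (X \<times> Y) Fp"
    using compact_uniformly_continuous[OF Fc[folded Fp_def] compact_Times[OF Xk Yk]] .
  have uc\<phi>: "uniformly_continuous_on Y \<phi>"
    unfolding uniformly_continuous_on_def
  proof (intro allI impI)
    fix e :: real assume e: "e > 0"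
    obtain d where d: "d > 0" and H: "\<And>p p'. p \<in> X \<times> Y \<Longrightarrow> p' \<in> X \<times> Y \<Longrightarrow> dist p' p < d \<Longrightarrow> dist (Fp p') (Fp p) < e"
      using ucF e unfolding uniformly_continuous_on_def by metis
    have H2: "\<bar>F x y' - F x y\<bar> < e" if "x \<in> X" "y \<in> Y" "y' \<in> Y" "dist y' y < d" for x y y'
    proof -
      have "dist (x, y') (x, y) = dist y' y" by (simp add: dist_Pair_Pair)
      hence "dist (Fp (x, y')) (Fp (x, y)) < e" using H[of "(x, y)" "(x, y')"] that by auto
      thus ?thesis by (simp add: Fp_def dist_real_def)
    qed
    show "\<exists>d>0. \<forall>y\<in>Y. \<forall>y'\<in>Y. dist y' y < d \<longrightarrow> dist (\<phi> y') (\<phi> y) < e"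
    proof (intro exI[of _ d] conjI ballI impI d)
      fix y y' assume yy: "y \<in> Y" "y' \<in> Y" "dist y' y < d"
      have yy': "dist y y' < d" using yy(3) by (simp add: dist_commute)
      have "\<phi> y' \<le> F (xm y) y'" unfolding \<phi>_def using xm[OF yy(2)] xm(1)[OF yy(1)] by blast
      also have "\<dots> < F (xm y) y + e" using H2[OF xm(1)[OF yy(1)] yy(1) yy(2) yy(3)] by linarith
      finally have 1: "\<phi> y' < \<phi> y + e" by (simp add: \<phi>_def)
      have "\<phi> y \<le> F (xm y') y" unfolding \<phi>_def using xm[OF yy(1)] xm(1)[OF yy(2)] by blast
      also have "\<dots> < F (xm y') y' + e" using H2[OF xm(1)[OF yy(2)] yy(2) yy(1) yy'] by linarith
      finally have 2: "\<phi> y < \<phi> y' + e" by (simp add: \<phi>_def)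
      show "dist (\<phi> y') (\<phi> y) < e" using 1 2 by (simp add: dist_real_def abs_less_iff)
    qed
  qed
  have c\<phi>: "continuous_on Y \<phi>" by (rule uniformly_continuous_imp_continuous[OF uc\<phi>])
  obtain ys where ysY: "ys \<in> Y" and ysmax: "\<And>y. y \<in> Y \<Longrightarrow> \<phi> y \<le> \<phi> ys"
    using continuous_attains_sup[OF Yk Yne c\<phi>] by blast
  define xs where "xs = xm ys"
  have xsX: "xs \<in> X" using xm(1)[OF ysY] by (simp add: xs_def)
  have xsmin: "\<And>x. x \<in> X \<Longrightarrow> F xs ys \<le> F x ys" using xm(2)[OF ysY] by (simp add: xs_def)
  have \<phi>ys: "\<phi> ys = F xs ys" by (simp add: \<phi>_def xs_def)
  obtain M where M: "\<And>x y. x \<in> X \<Longrightarrow> y \<in> Y \<Longrightarrow> \<bar>F x y\<bar> \<le> M"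
  proof -
    have "compact (Fp ` (X \<times> Y))" by (rule compact_continuous_image[OF Fc[folded Fp_def] compact_Times[OF Xk Yk]])
    then obtain M where "\<forall>z\<in>Fp ` (X \<times> Y). norm z \<le> M" using compact_imp_bounded bounded_iff by metis
    hence "\<And>x y. x \<in> X \<Longrightarrow> y \<in> Y \<Longrightarrow> \<bar>F x y\<bar> \<le> M" by (force simp: Fp_def)
    thus ?thesis using that by blast
  qed
  have saddle: "F xs y \<le> F xs ys" if yY: "y \<in> Y" for y
  proof (rule ccontr)
    assume "\<not> F xs y \<le> F xs ys"
    define \<delta> where "\<delta> = F xs y - F xs ys"
    have \<delta>0: "\<delta> > 0" using \<open>\<not> F xs y \<le> F xs ys\<close> by (simp add: \<delta>_def)
    define K0 where "K0 = Gy xs ys \<bullet> (y - ys) + 2 * M"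
    define G where "G = norm (Gx xs y)"
    have key: "\<delta>^2 \<le> G^2 * (2 * t * K0 / \<mu>)" if t0: "0 < t" and t1: "t \<le> 1" for t
    proof -
      define yt where "yt = (1 - t) *\<^sub>R ys + t *\<^sub>R y"
      have ytY: "yt \<in> Y" unfolding yt_def by (rule convexD[OF Yc ysY yY]) (use t0 t1 in simp_all)
      have d1: "ys - yt = t *\<^sub>R (ys - y)" by (simp add: yt_def algebra_simps)
      have d2: "y - yt = (1 - t) *\<^sub>R (y - ys)" by (simp add: yt_def algebra_simps)
      have d3: "yt - ys = t *\<^sub>R (y - ys)" by (simp add: yt_def algebra_simps)
      have conc: "(1 - t) * F x ys + t * F x y \<le> F x yt" if xX: "x \<in> X" for x
      proof -
        have a1: "F x ys \<le> F x yt + Gy x yt \<bullet> (ys - yt)" using E2[OF xX ytY ysY] nnY[of "ys - yt"] by linarith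
        have a2: "F x y \<le> F x yt + Gy x yt \<bullet> (y - yt)" using E2[OF xX ytY yY] nnY[of "y - yt"] by linarith
        have "(1 - t) * F x ys \<le> (1 - t) * (F x yt + Gy x yt \<bullet> (ys - yt))"
          using a1 t1 by (intro mult_left_mono) simp_all
        moreover have "t * F x y \<le> t * (F x yt + Gy x yt \<bullet> (y - yt))"
          using a2 t0 by (intro mult_left_mono) simp_all
        moreover have "(1 - t) * (Gy x yt \<bullet> (ys - yt)) + t * (Gy x yt \<bullet> (y - yt)) = 0"
          unfolding d1 d2 by (simp add: inner_diff_right algebra_simps)
        ultimately show ?thesis by (simp add: algebra_simps)
      qed
      define xt where "xt = xm yt"
      have xtX: "xt \<in> X" using xm(1)[OF ytY] by (simp add: xt_def)
      have "F xt yt \<le> \<phi> ys" using ysmax[OF ytY] by (simp add: \<phi>_def xt_def)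
      moreover have "(1 - t) * F xt ys + t * F xt y \<le> F xt yt" by (rule conc[OF xtX])
      moreover have "(1 - t) * F xs ys \<le> (1 - t) * F xt ys" using xsmin[OF xtX] t1 by (intro mult_left_mono) simp_all
      ultimately have "t * F xt y \<le> t * F xs ys" using \<phi>ys by (simp add: algebra_simps)
      hence Fxty: "F xt y \<le> F xs ys" using t0 by simp
      have s1: "F xs yt \<ge> F xt yt + \<mu> / 4 * (norm (xs - xt))\<^sup>2" using sc[OF ytY xsX] by (simp add: xt_def)
      have s2: "F xt ys \<ge> F xs ys + \<mu> / 4 * (norm (xt - xs))\<^sup>2" using sc[OF ysY xtX] by (simp add: xs_def)
      have s3': "F xs yt \<le> F xs ys + Gy xs ys \<bullet> (yt - ys)"
        using E2[OF xsX ysY ytY] nnY[of "yt - ys"] by linarith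
      have s3: "F xs yt \<le> F xs ys + t * (Gy xs ys \<bullet> (y - ys))"
        using s3' unfolding d3 by simp
      have s4: "F xt ys - F xt yt \<le> t * (2 * M)"
      proof -
        have "F xt ys - F xt yt \<le> t * (F xt ys - F xt y)" using conc[OF xtX] by (simp add: algebra_simps)
        also have "\<dots> \<le> t * (2 * M)" using M[OF xtX ysY] M[OF xtX yY] t0
          by (intro mult_left_mono) (simp_all add: abs_le_iff)
        finally show ?thesis .
      qed
      have nn: "norm (xt - xs) = norm (xs - xt)" by (rule norm_minus_commute)
      have rate: "\<mu> / 2 * (norm (xt - xs))\<^sup>2 \<le> t * K0"
        using s1 s2 s3 s4 unfolding K0_def nn by (simp add: algebra_simps)
      have g1: "F xt y \<ge> F xs y + Gx xs y \<bullet> (xt - xs)"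
        using E1[OF xsX xtX yY] nnX[of "xt - xs"] by linarith
      have "- (Gx xs y \<bullet> (xt - xs)) \<le> G * norm (xt - xs)"
        unfolding G_def using Cauchy_Schwarz_ineq2[of "Gx xs y" "xt - xs"] abs_ge_minus_self[of "Gx xs y \<bullet> (xt - xs)"] by linarith
      hence dl: "\<delta> \<le> G * norm (xt - xs)" using g1 Fxty by (simp add: \<delta>_def)
      hence "\<delta>^2 \<le> (G * norm (xt - xs))^2" using \<delta>0 by (intro power_mono) simp_all
      also have "\<dots> = G^2 * (norm (xt - xs))^2" by (simp add: power_mult_distrib)
      also have "\<dots> \<le> G^2 * (2 * t * K0 / \<mu>)"
      proof (rule mult_left_mono)
        show "(norm (xt - xs))\<^sup>2 \<le> 2 * t * K0 / \<mu>" using rate mu0 by (simp add: field_simps)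
      qed simp
      finally show ?thesis .
    qed
    define C where "C = G^2 * 2 * \<bar>K0\<bar> / \<mu>"
    have C0: "C \<ge> 0" using mu0 by (simp add: C_def)
    define t where "t = min 1 (\<delta>^2 / (2 * (C + 1)))"
    have t0: "t > 0" using \<delta>0 C0 by (simp add: t_def)
    have t1: "t \<le> 1" by (simp add: t_def)
    have "\<delta>^2 \<le> G^2 * (2 * t * K0 / \<mu>)" by (rule key[OF t0 t1])
    also have "\<dots> \<le> t * C"
      using mu0 t0 unfolding C_def by (simp add: field_simps mult_right_mono)
    also have "\<dots> \<le> (\<delta>^2 / (2 * (C + 1))) * C" using C0 by (intro mult_right_mono) (simp_all add: t_def)
    also have "\<dots> < \<delta>^2"
    proof -
      have d2: "\<delta>^2 > 0" using \<delta>0 by simp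
      hence "0 < C * \<delta>\<^sup>2 + 2 * \<delta>\<^sup>2" using C0 by (simp add: add_nonneg_pos)
      thus ?thesis using \<delta>0 C0 by (simp add: field_simps)
    qed
    finally show False by simp
  qed
  show ?thesis using xsX ysY xsmin saddle by blast
qed

lemma aux1:
  fixes w f0 g \<rho> N A B Q a :: real
  assumes "w \<ge> f0 + g - \<rho> / 2 * N"
  shows "w + (A + 2 * B + N) * a - Q \<ge> (f0 + A * a - Q) + (g + 2 * B * a) + (2 * a - \<rho>) / 2 * N"
  using assms by (simp add: algebra_simps diff_divide_distrib)
lemma aux2:
  fixes w f0 g \<rho> N A B P a :: real
  assumes "- w \<ge> - f0 + (- g) - \<rho> / 2 * N"
  shows "w + P - (A + 2 * B + N) * a \<le> (f0 + P - A * a) + (g - 2 * B * a) - (2 * a - \<rho>) / 2 * N"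
  using assms by (simp add: algebra_simps diff_divide_distrib)

lemma node_resolvent:
  fixes f :: "(real^'p::finite) \<times> (real^'q::finite) \<Rightarrow> real" and c :: "(real^'p) \<times> (real^'q)"
  assumes Xne: "X \<noteq> {}" and Xc: "convex X" and Xk: "compact X"
    and Yne: "Y \<noteq> {}" and Yc: "convex Y" and Yk: "compact Y"
    and alpha: "\<alpha> > 0" and mu: "1 / \<alpha> - \<rho> > 0"
    and diff: "\<And>z. f differentiable (at z)"
    and wcvx: "\<And>y. y \<in> Y \<Longrightarrow> weakly_convex_on \<rho> X (\<lambda>x. f (x, y)) (\<lambda>x. grad_x f x y)"
    and wccv: "\<And>x. x \<in> X \<Longrightarrow> weakly_convex_on \<rho> Y (\<lambda>y. - f (x, y)) (\<lambda>y. - grad_y f x y)"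
  shows "\<exists>u. (1 / \<alpha>) *\<^sub>R (c - u) - Bn f u \<in> Rn X Y u"
proof -
  obtain cx cy where c: "c = (cx, cy)" by (cases c)
  define a where "a = 1 / (2 * \<alpha>)"
  have a2: "2 * a = 1 / \<alpha>" unfolding a_def by simp
  define \<mu> where "\<mu> = 2 * a - \<rho>"
  have mu0: "\<mu> > 0" using mu by (simp add: \<mu>_def a2)
  define F where "F x y = f (x, y) + (norm (x - cx))\<^sup>2 * a - (norm (y - cy))\<^sup>2 * a" for x y
  define Gx where "Gx x y = grad_x f x y + (2 * a) *\<^sub>R (x - cx)" for x y
  define Gy where "Gy x y = grad_y f x y - (2 * a) *\<^sub>R (y - cy)" for x y
  have sqx: "(norm (x' - cx))\<^sup>2 = (norm (x - cx))\<^sup>2 + 2 * ((x - cx) \<bullet> (x' - x)) + (norm (x' - x))\<^sup>2"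
    for x x' :: "real^'p"
  proof -
    have "x' - cx = (x - cx) + (x' - x)" by simp
    hence "(norm (x' - cx))\<^sup>2 = (norm ((x - cx) + (x' - x)))\<^sup>2" by metis
    also have "\<dots> = (norm (x - cx))\<^sup>2 + 2 * ((x - cx) \<bullet> (x' - x)) + (norm (x' - x))\<^sup>2"
      unfolding power2_norm_eq_inner inner_add_left inner_add_right using inner_commute[of "x' - x" "x - cx"] by simp
    finally show ?thesis .
  qed
  have sqy: "(norm (y' - cy))\<^sup>2 = (norm (y - cy))\<^sup>2 + 2 * ((y - cy) \<bullet> (y' - y)) + (norm (y' - y))\<^sup>2"
    for y y' :: "real^'q"
  proof -
    have "y' - cy = (y - cy) + (y' - y)" by simp
    hence "(norm (y' - cy))\<^sup>2 = (norm ((y - cy) + (y' - y)))\<^sup>2" by metis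
    also have "\<dots> = (norm (y - cy))\<^sup>2 + 2 * ((y - cy) \<bullet> (y' - y)) + (norm (y' - y))\<^sup>2"
      unfolding power2_norm_eq_inner inner_add_left inner_add_right using inner_commute[of "y' - y" "y - cy"] by simp
    finally show ?thesis .
  qed
  have E1: "F x' y \<ge> F x y + Gx x y \<bullet> (x' - x) + \<mu> / 2 * (norm (x' - x))\<^sup>2"
    if "x \<in> X" "x' \<in> X" "y \<in> Y" for x x' y
  proof -
    have w: "f (x', y) \<ge> f (x, y) + grad_x f x y \<bullet> (x' - x) - \<rho> / 2 * (norm (x' - x))\<^sup>2"
      using wcvx[OF that(3)] that(1,2) unfolding weakly_convex_on_def by blast
    have e1: "F x' y = f (x', y) + ((norm (x - cx))\<^sup>2 + 2 * ((x - cx) \<bullet> (x' - x)) + (norm (x' - x))\<^sup>2) * a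
          - (norm (y - cy))\<^sup>2 * a" unfolding F_def sqx[of x' x] ..
    have e2: "Gx x y \<bullet> (x' - x) = grad_x f x y \<bullet> (x' - x) + 2 * ((x - cx) \<bullet> (x' - x)) * a"
      unfolding Gx_def by (simp add: inner_add_left algebra_simps)
    have e3: "F x y + Gx x y \<bullet> (x' - x) + \<mu> / 2 * (norm (x' - x))\<^sup>2
        = (f (x, y) + (norm (x - cx))\<^sup>2 * a - (norm (y - cy))\<^sup>2 * a)
          + (grad_x f x y \<bullet> (x' - x) + 2 * ((x - cx) \<bullet> (x' - x)) * a) + (2 * a - \<rho>) / 2 * (norm (x' - x))\<^sup>2"
      by (simp only: F_def e2 \<mu>_def)
    show ?thesis using aux1[where A="(norm (x - cx))\<^sup>2" and B="(x - cx) \<bullet> (x' - x)" and Q="(norm (y - cy))\<^sup>2 * a" and a=a, OF w] e1 e3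
      by linarith
  qed
  have E2: "F x y' \<le> F x y + Gy x y \<bullet> (y' - y) - \<mu> / 2 * (norm (y' - y))\<^sup>2"
    if "x \<in> X" "y \<in> Y" "y' \<in> Y" for x y y'
  proof -
    have w: "- f (x, y') \<ge> - f (x, y) + (- grad_y f x y) \<bullet> (y' - y) - \<rho> / 2 * (norm (y' - y))\<^sup>2"
      using wccv[OF that(1)] that(2,3) unfolding weakly_convex_on_def by blast
    have e1: "F x y' = f (x, y') + (norm (x - cx))\<^sup>2 * a
       - ((norm (y - cy))\<^sup>2 + 2 * ((y - cy) \<bullet> (y' - y)) + (norm (y' - y))\<^sup>2) * a"
      unfolding F_def sqy[of y' y] ..
    have e2: "Gy x y \<bullet> (y' - y) = grad_y f x y \<bullet> (y' - y) - 2 * ((y - cy) \<bullet> (y' - y)) * a"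
      unfolding Gy_def by (simp add: inner_diff_left algebra_simps)
    have w': "- f (x, y') \<ge> - f (x, y) + (- (grad_y f x y \<bullet> (y' - y))) - \<rho> / 2 * (norm (y' - y))\<^sup>2"
      using w by simp
    have e3: "F x y + Gy x y \<bullet> (y' - y) - \<mu> / 2 * (norm (y' - y))\<^sup>2
        = (f (x, y) + (norm (x - cx))\<^sup>2 * a - (norm (y - cy))\<^sup>2 * a)
          + (grad_y f x y \<bullet> (y' - y) - 2 * ((y - cy) \<bullet> (y' - y)) * a) - (2 * a - \<rho>) / 2 * (norm (y' - y))\<^sup>2"
      by (simp only: F_def e2 \<mu>_def)
    show ?thesis using aux2[where P="(norm (x - cx))\<^sup>2 * a" and A="(norm (y - cy))\<^sup>2" and B="(y - cy) \<bullet> (y' - y)" and a=a, OF w'] e1 e3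
      by linarith
  qed
  have fc: "continuous_on UNIV f"
    using diff by (simp add: continuous_at_imp_continuous_on differentiable_imp_continuous_within)
  have Feq: "(\<lambda>p. F (fst p) (snd p)) = (\<lambda>p. f p + (norm (fst p - cx))\<^sup>2 * a - (norm (snd p - cy))\<^sup>2 * a)"
    by (simp add: F_def fun_eq_iff)
  have Fc: "continuous_on (X \<times> Y) (\<lambda>p. F (fst p) (snd p))"
    unfolding Feq by (intro continuous_intros continuous_on_subset[OF fc]) auto
  obtain xs ys where xsX: "xs \<in> X" and ysY: "ys \<in> Y" and xsmin: "\<forall>x\<in>X. F xs ys \<le> F x ys"
      and ysmax: "\<forall>y\<in>Y. F xs y \<le> F xs ys"
    using saddle_exists[OF Xne Xc Xk Yne Yc Yk Fc mu0 E1 E2] by blast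
  have lin: "\<And>c. ((\<lambda>t::real. t * c) has_real_derivative c) (at 0)"
    by (auto intro!: derivative_eq_intros)
  have foX: "Gx xs ys \<bullet> (x - xs) \<ge> 0" if xX: "x \<in> X" for x
  proof -
    define d where "d = x - xs"
    define k where "k t = f ((xs, ys) + t *\<^sub>R (d, 0)) + t * (2 * a * ((xs - cx) \<bullet> d))" for t
    have kd: "(k has_real_derivative (frechet_derivative f (at (xs, ys)) (d, 0) + 2 * a * ((xs - cx) \<bullet> d))) (at 0)"
      unfolding k_def by (rule DERIV_add[OF f_dir_deriv[OF diff] lin])
    have kle: "k 0 \<le> k t + t^2 * (a * (norm d)\<^sup>2)" if t0: "0 < t" and t1: "t \<le> 1" for t
    proof -
      define xt where "xt = xs + t *\<^sub>R d"
      have "xt = (1 - t) *\<^sub>R xs + t *\<^sub>R x" by (simp add: xt_def d_def algebra_simps)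
      hence xtX: "xt \<in> X" using convexD[OF Xc xsX xX, of "1 - t" t] t0 t1 by simp
      have m: "F xs ys \<le> F xt ys" using xsmin xtX by blast
      have p: "(xs, ys) + t *\<^sub>R (d, 0) = (xt, ys)" by (simp add: xt_def)
      have q: "(norm (xt - cx))\<^sup>2 = (norm (xs - cx))\<^sup>2 + t * (2 * ((xs - cx) \<bullet> d)) + t^2 * (norm d)\<^sup>2"
        using sqx[of xt xs] by (simp add: xt_def power_mult_distrib)
      have "k t = f (xt, ys) + t * (2 * a * ((xs - cx) \<bullet> d))" by (simp add: k_def xt_def)
      moreover have "k 0 = f (xs, ys)" by (simp add: k_def)
      ultimately show ?thesis using m q unfolding F_def by (simp add: algebra_simps)
    qed
    have "0 \<le> frechet_derivative f (at (xs, ys)) (d, 0) + 2 * a * ((xs - cx) \<bullet> d)"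
      by (rule fo_lemma[OF kd kle])
    also have "frechet_derivative f (at (xs, ys)) (d, 0) = grad_x f xs ys \<bullet> d"
      by (rule grad_x_inner[OF diff, symmetric])
    also have "grad_x f xs ys \<bullet> d + 2 * a * ((xs - cx) \<bullet> d) = Gx xs ys \<bullet> d"
      by (simp add: Gx_def inner_add_left)
    finally show ?thesis by (simp add: d_def)
  qed
  have foY: "Gy xs ys \<bullet> (y - ys) \<le> 0" if yY: "y \<in> Y" for y
  proof -
    define e where "e = y - ys"
    define k where "k t = - f ((xs, ys) + t *\<^sub>R (0, e)) + t * (2 * a * ((ys - cy) \<bullet> e))" for t
    have kd: "(k has_real_derivative (- frechet_derivative f (at (xs, ys)) (0, e) + 2 * a * ((ys - cy) \<bullet> e))) (at 0)"
      unfolding k_def by (rule DERIV_add[OF DERIV_minus[OF f_dir_deriv[OF diff]] lin])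
    have kle: "k 0 \<le> k t + t^2 * (a * (norm e)\<^sup>2)" if t0: "0 < t" and t1: "t \<le> 1" for t
    proof -
      define yt where "yt = ys + t *\<^sub>R e"
      have "yt = (1 - t) *\<^sub>R ys + t *\<^sub>R y" by (simp add: yt_def e_def algebra_simps)
      hence ytY: "yt \<in> Y" using convexD[OF Yc ysY yY, of "1 - t" t] t0 t1 by simp
      have m: "F xs yt \<le> F xs ys" using ysmax ytY by blast
      have p: "(xs, ys) + t *\<^sub>R (0, e) = (xs, yt)" by (simp add: yt_def)
      have q: "(norm (yt - cy))\<^sup>2 = (norm (ys - cy))\<^sup>2 + t * (2 * ((ys - cy) \<bullet> e)) + t^2 * (norm e)\<^sup>2"
        using sqy[of yt ys] by (simp add: yt_def power_mult_distrib)
      have "k t = - f (xs, yt) + t * (2 * a * ((ys - cy) \<bullet> e))" by (simp add: k_def yt_def)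
      moreover have "k 0 = - f (xs, ys)" by (simp add: k_def)
      ultimately show ?thesis using m q unfolding F_def by (simp add: algebra_simps)
    qed
    have "0 \<le> - frechet_derivative f (at (xs, ys)) (0, e) + 2 * a * ((ys - cy) \<bullet> e)"
      by (rule fo_lemma[OF kd kle])
    also have "frechet_derivative f (at (xs, ys)) (0, e) = grad_y f xs ys \<bullet> e"
      by (rule grad_y_inner[OF diff, symmetric])
    also have "- (grad_y f xs ys \<bullet> e) + 2 * a * ((ys - cy) \<bullet> e) = - (Gy xs ys \<bullet> e)"
      by (simp add: Gy_def inner_diff_left)
    finally show ?thesis by (simp add: e_def)
  qed
  have fst_eq: "fst ((1 / \<alpha>) *\<^sub>R (c - (xs, ys)) - Bn f (xs, ys)) = - Gx xs ys"
    unfolding c Bn_def Gx_def a2[symmetric] by (simp add: algebra_simps)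
  have snd_eq: "snd ((1 / \<alpha>) *\<^sub>R (c - (xs, ys)) - Bn f (xs, ys)) = Gy xs ys"
    unfolding c Bn_def Gy_def a2[symmetric] by (simp add: algebra_simps)
  show ?thesis
  proof (intro exI[of _ "(xs, ys)"])
    show "(1 / \<alpha>) *\<^sub>R (c - (xs, ys)) - Bn f (xs, ys) \<in> Rn X Y (xs, ys)"
      unfolding Rn_def mem_Times_iff fst_eq snd_eq
      using xsX ysY foX foY by (auto simp: normal_cone_def)
  qed
qed

lemma poly_nonneg:
  fixes s :: real assumes "0 \<le> s" "s \<le> 1"
  shows "(1 + s)^2 * (3 + s^2) - 16 * s^2 \<ge> 0"
proof -
  have e: "(1 + s)^2 * (3 + s^2) - 16 * s^2 = (1 - s) * (3 + 9 * s - 3 * s^2 - s^3)"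
    by (simp add: algebra_simps power2_eq_square power3_eq_cube)
  have "s^2 \<le> s" using assms by (simp add: power2_eq_square mult_left_le_one_le)
  moreover have "s^3 \<le> s" using assms by (simp add: power3_eq_cube mult_le_one mult_left_le_one_le)
  ultimately have "3 + 9 * s - 3 * s^2 - s^3 \<ge> 0" using assms by linarith
  thus ?thesis unfolding e using assms by simp
qed

lemma le_from_diff: fixes X Y Q :: real shows "0 \<le> Q \<Longrightarrow> X - Y = Q / 4 \<Longrightarrow> Y \<le> X"
  by linarith

lemma final_ineq:
  fixes s k A B :: real
  assumes s0: "0 \<le> s" and s1: "s \<le> 1" and k: "k \<le> (1 - s) / 2" and A: "0 \<le> A" and B: "0 \<le> B"
  shows "(1 - s^2) / 4 * (A^2 + B^2) \<le> (1 - k) * A^2 + B^2 - 2 * s * A * B"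
proof -
  have kk: "(1 - k) * A^2 \<ge> (1 + s) / 2 * A^2" using k by (intro mult_right_mono) simp_all
  have P: "(1 + s)^2 * (3 + s^2) - 16 * s^2 \<ge> 0" by (rule poly_nonneg[OF s0 s1])
  define p where "p = (1 + s)^2"
  have p0: "p > 0" using s0 by (simp add: p_def)
  have id: "p * ((1 + s)^2 * A^2 + (3 + s^2) * B^2 - 8 * s * A * B)
        = (p * A - 4 * s * B)^2 + ((1 + s)^2 * (3 + s^2) - 16 * s^2) * B^2"
    by (simp add: p_def algebra_simps power2_eq_square)
  have "0 \<le> (p * A - 4 * s * B)^2 + ((1 + s)^2 * (3 + s^2) - 16 * s^2) * B^2"
    using P by simp
  hence "0 \<le> (1 + s)^2 * A^2 + (3 + s^2) * B^2 - 8 * s * A * B"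
    using p0 id by (metis zero_le_mult_iff not_less)
  moreover have "((1 + s) / 2 * A^2 + B^2 - 2 * s * A * B) - (1 - s^2) / 4 * (A^2 + B^2)
     = ((1 + s)^2 * A^2 + (3 + s^2) * B^2 - 8 * s * A * B) / 4"
    by (simp add: power2_eq_square field_simps)
  ultimately have "(1 - s^2) / 4 * (A^2 + B^2) \<le> (1 + s) / 2 * A^2 + B^2 - 2 * s * A * B"
    by (rule le_from_diff)
  thus ?thesis using kk by linarith
qed

theorem lemma2:
  fixes X :: "(real^'p) set" and Y :: "(real^'q) set"
    and f :: "'n::finite \<Rightarrow> (real^'p) \<times> (real^'q) \<Rightarrow> real"
    and W :: "real^'n^'n" and \<rho> \<alpha> :: real
  assumes X: "X \<noteq> {}" "convex X" "closed X" "bounded X"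
    and Y: "Y \<noteq> {}" "convex Y" "closed Y" "bounded Y"
    and rho: "\<rho> > 0"
    and diff: "\<And>n z. f n differentiable (at z)"
    and wcvx: "\<And>n y. y \<in> Y \<Longrightarrow>
                 weakly_convex_on \<rho> X (\<lambda>x. f n (x, y)) (\<lambda>x. grad_x (f n) x y)"
    and wccv: "\<And>n x. x \<in> X \<Longrightarrow>
                 weakly_convex_on \<rho> Y (\<lambda>y. - f n (x, y)) (\<lambda>y. - grad_y (f n) x y)"
    and Wsym: "transpose W = W"
    and Wone: "W *v (\<chi> i. 1) = (\<chi> i. 1)"
    and Wnull: "{v. v - W *v v = 0} = span {(\<chi> i. 1) :: real^'n}"
    and Wpd: "\<And>v. v \<noteq> 0 \<Longrightarrow> v \<bullet> (W *v v) > 0"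
    and WleI: "\<And>v. v \<bullet> (W *v v) \<le> v \<bullet> v"
    and alpha: "\<alpha> > 0"
  shows "weakly_monotone \<rho> (BR f X Y)
         \<and> (\<alpha> < 1 / \<rho> \<longrightarrow>
              inverse_well_defined (\<lambda>u. {u + \<alpha> *\<^sub>R g | g. g \<in> BR f X Y u}))
         \<and> (\<alpha> \<le> (1 - sqrt (1 - lambda_min W)) / (2 * \<rho>) \<longrightarrow>
              strongly_monotone (lambda_min W / 4) (DT f X Y W \<alpha>))"
proof (intro conjI impI)
  have mono: "weakly_monotone \<rho> (BR f X Y)" by (rule BR_mono[OF wcvx wccv])
  thus "weakly_monotone \<rho> (BR f X Y)" .
  have monoI: "(g - g') \<bullet> (z - z') \<ge> - \<rho> * (norm (z - z'))\<^sup>2"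
    if "g \<in> BR f X Y z" "g' \<in> BR f X Y z'" for g g' z z'
    using mono that unfolding weakly_monotone_def by blast
  {
    assume ar: "\<alpha> < 1 / \<rho>"
    have mu: "1 / \<alpha> - \<rho> > 0"
    proof -
      have "\<alpha> * \<rho> < 1" using ar rho by (simp add: field_simps)
      hence "\<rho> < 1 / \<alpha>" using alpha by (simp add: field_simps)
      thus ?thesis by simp
    qed
    have Xk: "compact X" using X by (simp add: compact_eq_bounded_closed)
    have Yk: "compact Y" using Y by (simp add: compact_eq_bounded_closed)
    show "inverse_well_defined (\<lambda>u. {u + \<alpha> *\<^sub>R g | g. g \<in> BR f X Y u})"
      unfolding inverse_well_defined_def
    proof
      fix z :: "('p,'q,'n) stack"
      have "\<forall>n. \<exists>u. (1 / \<alpha>) *\<^sub>R (z$n - u) - Bn (f n) u \<in> Rn X Y u"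
        using node_resolvent[OF X(1,2) Xk Y(1,2) Yk alpha mu diff wcvx wccv] by blast
      then obtain U where U: "\<And>n. (1 / \<alpha>) *\<^sub>R (z$n - U n) - Bn (f n) (U n) \<in> Rn X Y (U n)" by metis
      define u where "u = (\<chi> n. U n)"
      define g where "g = (1 / \<alpha>) *\<^sub>R (z - u)"
      have gB: "g \<in> BR f X Y u" using U by (simp add: BR_def g_def u_def)
      have zg: "z = u + \<alpha> *\<^sub>R g" using alpha by (simp add: g_def)
      show "\<exists>!u. z \<in> {u + \<alpha> *\<^sub>R g | g. g \<in> BR f X Y u}"
      proof (rule ex1I[of _ u])
        show "z \<in> {u + \<alpha> *\<^sub>R g | g. g \<in> BR f X Y u}" using gB zg by blast
      next
        fix u' assume "z \<in> {u' + \<alpha> *\<^sub>R g | g. g \<in> BR f X Y u'}"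
        then obtain g' where g'B: "g' \<in> BR f X Y u'" and zg': "z = u' + \<alpha> *\<^sub>R g'" by blast
        have m: "(g' - g) \<bullet> (u' - u) \<ge> - \<rho> * (norm (u' - u))\<^sup>2" by (rule monoI[OF g'B gB])
        have eq: "\<alpha> *\<^sub>R (g' - g) = - (u' - u)" using zg zg' by (simp add: algebra_simps)
        have "g' - g = (1 / \<alpha>) *\<^sub>R (\<alpha> *\<^sub>R (g' - g))" using alpha by simp
        also have "\<dots> = - (1 / \<alpha>) *\<^sub>R (u' - u)" unfolding eq by (simp add: algebra_simps)
        finally have "g' - g = - (1 / \<alpha>) *\<^sub>R (u' - u)" .
        hence "(g' - g) \<bullet> (u' - u) = - (1 / \<alpha>) * (norm (u' - u))\<^sup>2"
          by (simp add: power2_norm_eq_inner)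
        hence "(1 / \<alpha> - \<rho>) * (norm (u' - u))\<^sup>2 \<le> 0" using m by (simp add: algebra_simps)
        hence "(norm (u' - u))\<^sup>2 \<le> 0" using mu by (simp add: mult_le_0_iff)
        thus "u' = u" by simp
      qed
    qed
  }
  {
    assume ah: "\<alpha> \<le> (1 - sqrt (1 - lambda_min W)) / (2 * \<rho>)"
    define s where "s = sqrt (1 - lambda_min W)"
    have l0: "0 < lambda_min W" and l1: "lambda_min W \<le> 1"
      using W_facts(1,2)[of W] Wsym Wpd WleI by blast+
    have s0: "0 \<le> s" and s1: "s \<le> 1" using l0 l1 by (simp_all add: s_def)
    have ss: "s^2 = 1 - lambda_min W" using l1 by (simp add: s_def)
    have kb: "\<alpha> * \<rho> \<le> (1 - s) / 2"
      using ah rho by (simp add: s_def field_simps)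
    define U where "U = (Uop W :: ('p,'q,'n) stack \<Rightarrow> _)"
    have linU: "linear U" unfolding U_def by (rule U_props(1)[OF Wsym Wpd WleI])
    have Un: "norm (U y) \<le> s * norm y" for y unfolding U_def s_def by (rule U_norm[OF Wsym Wpd WleI])
    show "strongly_monotone (lambda_min W / 4) (DT f X Y W \<alpha>)"
      unfolding strongly_monotone_def
    proof (intro allI impI)
      fix v v' w w' :: "('p,'q,'n) stack \<times> ('p,'q,'n) stack"
      assume w: "w \<in> DT f X Y W \<alpha> v" and w': "w' \<in> DT f X Y W \<alpha> v'"
      obtain z q where v: "v = (z, q)" by (cases v)
      obtain z' q' where v': "v' = (z', q')" by (cases v')
      obtain g where gB: "g \<in> BR f X Y z" and wg: "w = (z + U q, U z + q) + (\<alpha> *\<^sub>R g + U q, - U z)"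
        using w unfolding DT_def v U_def Let_def by auto
      obtain g' where gB': "g' \<in> BR f X Y z'" and wg': "w' = (z' + U q', U z' + q') + (\<alpha> *\<^sub>R g' + U q', - U z')"
        using w' unfolding DT_def v' U_def Let_def by auto
      define dz where "dz = z - z'"
      define dq where "dq = q - q'"
      have Udq: "U q - U q' = U dq" by (simp add: dq_def linear_diff[OF linU])
      have "(w - w') \<bullet> (v - v') = (dz + 2 *\<^sub>R U dq + \<alpha> *\<^sub>R (g - g')) \<bullet> dz + dq \<bullet> dq"
      proof -
        have "fst (w - w') = dz + 2 *\<^sub>R (U q - U q') + \<alpha> *\<^sub>R (g - g')"
          by (simp add: wg wg' dz_def algebra_simps scaleR_2)
        moreover have "snd (w - w') = dq" by (simp add: wg wg' dq_def)
        moreover have "v - v' = (dz, dq)" by (simp add: v v' dz_def dq_def)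
        ultimately show ?thesis unfolding Udq by (metis inner_Pair prod.collapse)
      qed
      also have "\<dots> = dz \<bullet> dz + 2 * (U dq \<bullet> dz) + \<alpha> * ((g - g') \<bullet> dz) + dq \<bullet> dq"
        by (simp add: inner_add_left)
      finally have P: "(w - w') \<bullet> (v - v') = dz \<bullet> dz + 2 * (U dq \<bullet> dz) + \<alpha> * ((g - g') \<bullet> dz) + dq \<bullet> dq" .
      define A where "A = norm dz"
      define B where "B = norm dq"
      have gm: "\<alpha> * ((g - g') \<bullet> dz) \<ge> - (\<alpha> * \<rho>) * A^2"
        using monoI[OF gB gB'] alpha unfolding A_def dz_def
        by (metis (no_types, lifting) mult.assoc mult_left_mono less_imp_le mult_minus_right)
      have um: "U dq \<bullet> dz \<ge> - (s * A * B)"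
      proof -
        have "\<bar>U dq \<bullet> dz\<bar> \<le> norm (U dq) * norm dz" by (rule Cauchy_Schwarz_ineq2)
        also have "\<dots> \<le> (s * norm dq) * norm dz" by (intro mult_right_mono Un) simp
        finally show ?thesis unfolding A_def B_def by (simp add: algebra_simps abs_le_iff)
      qed
      have h1: "(w - w') \<bullet> (v - v') \<ge> (1 - \<alpha> * \<rho>) * A^2 + B^2 - 2 * s * A * B"
        unfolding P using gm um by (simp add: A_def B_def power2_norm_eq_inner algebra_simps)
      have h2: "(1 - s^2) / 4 * (A^2 + B^2) \<le> (1 - \<alpha> * \<rho>) * A^2 + B^2 - 2 * s * A * B"
        by (rule final_ineq[OF s0 s1 kb]) (simp_all add: A_def B_def)
      have h3: "(norm (v - v'))\<^sup>2 = A^2 + B^2"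
        by (simp add: v v' A_def B_def dz_def dq_def norm_Pair)
      have "lambda_min W / 4 * (norm (v - v'))\<^sup>2 = (1 - s^2) / 4 * (A^2 + B^2)" unfolding h3 using ss by simp
      thus "(w - w') \<bullet> (v - v') \<ge> lambda_min W / 4 * (norm (v - v'))\<^sup>2" using h1 h2 by linarith
    qed
  }
qed

end
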